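(* Let $n\ge2$, $0<\beta<n$ and $1<\tau<\infty$, and let $1\le\eta\le q\le p<\infty$ satisfy $$\frac1\eta<\beta+\frac1q,\qquad\frac{n-1}p=\frac{n-1}\tau+\frac1\eta-\frac1q-\beta.$$ Then the operator $G_\beta F(y)=\int_{\mathbb{R}^n_+}\frac{F(z)}{|y-z|^{n-\beta}}dz$ is bounded from $L^\tau L^\eta(\mathbb{R}^n_+)$ into $L^pL^q(\mathbb{R}^n_+)$.
   Context: For $p,q\in[1,\infty]$, $L^pL^q(\mathbb{R}^n_+)$ is the mixed-norm space of measurable $F$ on $\mathbb{R}^n_+$ with $\|F\|_{L^pL^q(\mathbb{R}^n_+)}=\big\|\,x'\mapsto\|F(x',\cdot)\|_{L^q(\mathbb{R}_+,dx_n)}\big\|_{L^p(\mathbb{R}^{n-1},dx')}<\infty$. *)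

theory Defs
  imports "HOL-Analysis.Analysis"
begin

text \<open>Points of the upper half space R^n_+ are pairs (x', x_n) with x' :: real^'m
  (so n = CARD('m) + 1 \<ge> 2) and x_n > 0. The distance on the product type is the
  Euclidean one: dist (a,b) (c,d) = sqrt (dist a c ^ 2 + dist b d ^ 2).\<close>

definition upper_half :: "('m::finite) itself \<Rightarrow> ((real^'m) \<times> real) set" where
  "upper_half _ = {z. snd z > 0}"

definition epow :: "ennreal \<Rightarrow> real \<Rightarrow> ennreal" where
  "epow x r = (if x = \<infinity> then \<infinity> else ennreal (enn2real x powr r))"

definition mixnorm :: "real \<Rightarrow> real \<Rightarrow> ((real^'m::finite) \<times> real \<Rightarrow> real) \<Rightarrow> ennreal" where
  "mixnorm p q F =
     epow (\<integral>\<^sup>+ x'. epow (\<integral>\<^sup>+ t. indicator {0<..} t * ennreal (\<bar>F (x', t)\<bar> powr q) \<partial>lborel) (p / q)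
             \<partial>lborel) (1 / p)"

definition G_op :: "real \<Rightarrow> ((real^'m::finite) \<times> real \<Rightarrow> real) \<Rightarrow> (real^'m) \<times> real \<Rightarrow> real" where
  "G_op \<beta> F y = (LINT z : upper_half TYPE('m) | lborel.
      F z / dist y z powr (real (CARD('m) + 1) - \<beta>))"

end

theory Submission
  imports Defs
begin


lemma measurable_epow[measurable]:
  assumes [measurable]: "f \<in> borel_measurable M"
  shows "(\<lambda>x. epow (f x) r) \<in> borel_measurable M"
proof -
  have "(\<lambda>x. epow (f x) r) = (\<lambda>x. if f x = top then top else ennreal (enn2real (f x) powr r))"
    by (simp add: epow_def fun_eq_iff)
  also have "\<dots> \<in> borel_measurable M" by measurable
  finally show ?thesis .
qed

lemma epow_top[simp]: "epow top r = top" by (simp add: epow_def)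
lemma epow_ennreal: "0 \<le> x \<Longrightarrow> epow (ennreal x) r = ennreal (x powr r)"
  by (simp add: epow_def)
lemma epow_0[simp]: "epow 0 r = 0" by (simp add: epow_def)

lemma epow_cases: obtains "x = top" | y where "x = ennreal y" "0 \<le> y"
  by (cases x) auto

lemma epow_mono: assumes "0 \<le> r" "x \<le> y" shows "epow x r \<le> epow y r"
proof (cases y rule: epow_cases)
  case 1 then show ?thesis by simp
next
  case (2 b)
  then obtain a where a: "x = ennreal a" "0 \<le> a" "a \<le> b" using assms
    by (metis ennreal_cases ennreal_le_iff ennreal_neg top.extremum_uniqueI ennreal_less_zero_iff not_le ennreal_eq_0_iff)
  show ?thesis using a 2 assms by (auto simp: epow_ennreal intro!: ennreal_leI powr_mono2)
qed

lemma epow_mult: "epow (x * y) r = epow x r * epow y r"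
proof (cases x rule: epow_cases)
  case 1 then show ?thesis
    by (cases y rule: epow_cases) (auto simp: epow_ennreal ennreal_mult_top ennreal_top_mult powr_gt_zero)
next
  case (2 a)
  then show ?thesis
    by (cases y rule: epow_cases)
       (auto simp: epow_ennreal ennreal_mult_top ennreal_top_mult powr_gt_zero ennreal_mult[symmetric] powr_mult)
qed

lemma epow_epow: "epow (epow x a) b = epow x (a * b)"
  by (cases x rule: epow_cases) (auto simp: epow_ennreal powr_powr)

lemma epow_add: "epow x a * epow x b = epow x (a + b)"
  by (cases x rule: epow_cases)
     (auto simp: epow_ennreal ennreal_mult[symmetric] powr_add powr_gt_zero ennreal_top_mult)

lemma epow_1[simp]: "epow x 1 = x"
  by (cases x rule: epow_cases) (auto simp: epow_ennreal)

lemma epow_pos: "0 < x \<Longrightarrow> 0 < epow x r"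
  by (cases x rule: epow_cases) (auto simp: epow_ennreal)

lemma epow_fin: "x < top \<Longrightarrow> epow x r < top"
  by (cases x rule: epow_cases) (auto simp: epow_ennreal)

lemma epow_eq_0_iff: "epow x r = 0 \<longleftrightarrow> x = 0"
  by (cases x rule: epow_cases) (auto simp: epow_ennreal)

lemma epow_eq_top_iff: "epow x r = top \<longleftrightarrow> x = top"
  by (cases x rule: epow_cases) (auto simp: epow_ennreal)

lemma amgm3:
  fixes u v w a b c :: real
  assumes "0 \<le> u" "0 \<le> v" "0 \<le> w" "0 \<le> a" "0 \<le> b" "0 \<le> c" "a + b + c = 1"
  shows "u powr a * v powr b * w powr c \<le> a * u + b * v + c * w"
proof (cases "u = 0 \<or> v = 0 \<or> w = 0")
  case True then show ?thesis using assms by auto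
next
  case False
  then have pos: "0 < u" "0 < v" "0 < w" using assms by auto
  show ?thesis
  proof (cases "b + c = 0")
    case True then have "b = 0" "c = 0" "a = 1" using assms by auto
    then show ?thesis using pos by auto
  next
    case False
    then have bc: "0 < b + c" using assms by auto
    define m where "m = v powr (b/(b+c)) * w powr (c/(b+c))"
    have m0: "0 < m" using pos by (simp add: m_def)
    have "v powr b * w powr c = m powr (b + c)"
      using bc pos by (simp add: m_def powr_mult powr_powr)
    then have "u powr a * v powr b * w powr c = u powr a * m powr (b+c)" by (simp add: mult.assoc)
    also have "\<dots> \<le> a * u + (b+c) * m"
      using Youngs_inequality_0[of a "b+c" u m] assms pos m0 by auto
    also have "(b+c) * m \<le> b * v + c * w"
    proof -
      have "m \<le> b/(b+c) * v + c/(b+c) * w"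
        unfolding m_def using Youngs_inequality_0[of "b/(b+c)" "c/(b+c)" v w] bc assms pos
        by (auto simp: add_divide_distrib[symmetric])
      also have "b/(b+c) * v + c/(b+c) * w = (b * v + c * w) / (b+c)" by (simp add: add_divide_distrib)
      finally show ?thesis using bc by (simp add: field_simps)
    qed
    finally show ?thesis by simp
  qed
qed

lemma holder3:
  fixes X Y Z :: "'a \<Rightarrow> real"
  assumes [measurable]: "X \<in> borel_measurable M" "Y \<in> borel_measurable M" "Z \<in> borel_measurable M"
    and nn: "\<And>x. 0 \<le> X x" "\<And>x. 0 \<le> Y x" "\<And>x. 0 \<le> Z x"
    and ex: "0 \<le> a" "0 \<le> b" "0 \<le> c" "a + b + c = 1"
  shows "(\<integral>\<^sup>+x. ennreal (X x powr a * Y x powr b * Z x powr c) \<partial>M)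
     \<le> epow (\<integral>\<^sup>+x. X x \<partial>M) a * epow (\<integral>\<^sup>+x. Y x \<partial>M) b * epow (\<integral>\<^sup>+x. Z x \<partial>M) c"
proof -
  define A where "A = (\<integral>\<^sup>+x. X x \<partial>M)"
  define B where "B = (\<integral>\<^sup>+x. Y x \<partial>M)"
  define C where "C = (\<integral>\<^sup>+x. Z x \<partial>M)"
  let ?L = "(\<integral>\<^sup>+x. ennreal (X x powr a * Y x powr b * Z x powr c) \<partial>M)"
  have "?L \<le> epow A a * epow B b * epow C c"
  proof (cases "A = 0 \<or> B = 0 \<or> C = 0")
    case True
    then have "(AE x in M. X x = 0) \<or> (AE x in M. Y x = 0) \<or> (AE x in M. Z x = 0)"
      unfolding A_def B_def C_def
      using nn by (subst (asm) (1 2 3) nn_integral_0_iff_AE) (auto elim!: AE_mp intro!: AE_I2 simp: order.antisym)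
    then have "AE x in M. X x = 0 \<or> Y x = 0 \<or> Z x = 0"
      by (elim disjE) (auto elim!: eventually_mono)
    then have "AE x in M. ennreal (X x powr a * Y x powr b * Z x powr c) = 0"
      by (auto elim!: AE_mp)
    then have "?L = 0" by (simp add: nn_integral_0_iff_AE)
    then show ?thesis by simp
  next
    case False
    then have pos: "0 < A" "0 < B" "0 < C" by (auto simp: zero_less_iff_neq_zero)
    show ?thesis
    proof (cases "A = top \<or> B = top \<or> C = top")
      case True
      have p: "epow A a \<noteq> 0" "epow B b \<noteq> 0" "epow C c \<noteq> 0"
        using pos by (simp_all add: epow_eq_0_iff)
      from True have "epow A a = top \<or> epow B b = top \<or> epow C c = top"
        by (simp add: epow_eq_top_iff)
      then have "epow A a * epow B b * epow C c = top"
        using p by (auto simp: ennreal_mult_eq_top_iff)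
      then show ?thesis by simp
    next
      case False
      then obtain A' B' C' where ABC: "A = ennreal A'" "B = ennreal B'" "C = ennreal C'"
        "0 < A'" "0 < B'" "0 < C'" using pos
        by (metis ennreal_cases ennreal_less_zero_iff le_less top.not_eq_extremum)
      define K where "K = A' powr a * B' powr b * C' powr c"
      have K0: "0 \<le> K" by (simp add: K_def)
      have pw: "X x powr a * Y x powr b * Z x powr c
          \<le> K * (a * (X x / A') + b * (Y x / B') + c * (Z x / C'))" for x
      proof -
        have "X x powr a * Y x powr b * Z x powr c
            = K * ((X x / A') powr a * (Y x / B') powr b * (Z x / C') powr c)"
          using ABC nn[of x] by (simp add: K_def powr_divide powr_gt_zero field_simps)
        also have "\<dots> \<le> K * (a * (X x / A') + b * (Y x / B') + c * (Z x / C'))"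
          using ABC nn[of x] ex K0 by (intro mult_left_mono amgm3) auto
        finally show ?thesis .
      qed
      have "?L \<le> (\<integral>\<^sup>+x. ennreal (K * (a / A' * X x + b / B' * Y x + c / C' * Z x)) \<partial>M)"
        using pw by (intro nn_integral_mono ennreal_leI) (simp add: field_simps)
      also have "\<dots> = (\<integral>\<^sup>+x. ennreal K * (ennreal (a / A') * X x + ennreal (b / B') * Y x + ennreal (c / C') * Z x) \<partial>M)"
      proof (intro nn_integral_cong)
        fix x
        have em: "\<And>u v. 0 \<le> u \<Longrightarrow> 0 \<le> v \<Longrightarrow> ennreal u * ennreal v = ennreal (u * v)"
          by (simp add: ennreal_mult)
        show "ennreal (K * (a / A' * X x + b / B' * Y x + c / C' * Z x)) = ennreal K * (ennreal (a / A') * X x + ennreal (b / B') * Y x + ennreal (c / C') * Z x)"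
          using nn[of x] ABC ex K0 by (simp add: em ennreal_plus[symmetric] field_simps del: ennreal_plus)
      qed
      also have "\<dots> = ennreal K * (ennreal (a / A') * A + ennreal (b / B') * B + ennreal (c / C') * C)"
        unfolding A_def B_def C_def
        by (simp add: nn_integral_cmult nn_integral_add)
      also have "\<dots> = ennreal K"
      proof -
        have em: "\<And>u v. 0 \<le> u \<Longrightarrow> 0 \<le> v \<Longrightarrow> ennreal u * ennreal v = ennreal (u * v)"
          by (simp add: ennreal_mult)
        show ?thesis using ABC ex K0 by (simp add: em ennreal_plus[symmetric] del: ennreal_plus)
      qed
      also have "\<dots> = epow A a * epow B b * epow C c"
        using ABC by (simp add: epow_ennreal K_def ennreal_mult)
      finally show ?thesis .
    qed
  qed
  then show ?thesis by (simp add: A_def B_def C_def)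
qed



definition ind :: "real \<Rightarrow> real \<Rightarrow> ennreal" where
  "ind a v = (if 0 < a \<and> a < v then 1 else 0)"

lemma measurable_ind[measurable (raw)]:
  assumes [measurable]: "f \<in> borel_measurable M" "g \<in> borel_measurable M"
  shows "(\<lambda>x. ind (f x) (g x)) \<in> borel_measurable M"
  unfolding ind_def by measurable

lemma ind_int: "(\<integral>\<^sup>+a. ind a v \<partial>lborel) = ennreal v"
proof -
  have "(\<lambda>a. ind a v) = indicator {0<..<v}" by (auto simp: ind_def fun_eq_iff)
  then show ?thesis by (cases "0 \<le> v") (auto simp: ennreal_neg)
qed

lemma ind_le1: "ind a v \<le> 1" by (simp add: ind_def)
lemma ind_mult_le: "ind a v * w \<le> w" by (simp add: ind_def)
lemma ind_mult_le': "w * ind a v \<le> w" by (simp add: ind_def)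

lemma ball_measure:
  fixes c :: "'a::euclidean_space"
  assumes "0 \<le> r"
  shows "emeasure lborel (ball c r) = ennreal (r ^ DIM('a)) * emeasure lborel (ball (0::'a) 1)"
  using emeasure_lebesgue_ball_conv_unit_ball[OF assms, of c] by simp

lemma swap_int:
  fixes h :: "'a::euclidean_space \<Rightarrow> 'b::euclidean_space \<Rightarrow> ennreal"
  assumes "(\<lambda>(x, y). h x y) \<in> borel_measurable (lborel \<Otimes>\<^sub>M lborel)"
  shows "(\<integral>\<^sup>+x. \<integral>\<^sup>+y. h x y \<partial>lborel \<partial>lborel) = (\<integral>\<^sup>+y. \<integral>\<^sup>+x. h x y \<partial>lborel \<partial>lborel)"
  using lborel_pair.Fubini'[OF assms] by simp

lemma moment:
  fixes f :: "'a::euclidean_space \<Rightarrow> real"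
  assumes [measurable]: "f \<in> borel_measurable lborel" and nn: "\<And>x. 0 \<le> f x" and t: "0 < t"
  shows "(\<integral>\<^sup>+a. ennreal (a powr (t - 1)) * (\<integral>\<^sup>+x. ind a (f x) \<partial>lborel) \<partial>lborel)
       = ennreal (1 / t) * (\<integral>\<^sup>+x. ennreal (f x powr t) \<partial>lborel)"
proof -
  have inner: "(\<integral>\<^sup>+a. ennreal (a powr (t - 1)) * ind a v \<partial>lborel) = ennreal (1/t) * ennreal (v powr t)"
    if v: "0 \<le> v" for v
  proof -
    have "(\<integral>\<^sup>+a. ennreal (a powr (t - 1)) * ind a v \<partial>lborel)
        = (\<integral>\<^sup>+a. ennreal (a powr (t - 1)) * indicator {0..v} a \<partial>lborel)"
    proof (intro nn_integral_cong_AE)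
      show "AE a in lborel. ennreal (a powr (t - 1)) * ind a v = ennreal (a powr (t - 1)) * indicator {0..v} a"
        using AE_lborel_singleton[of 0] AE_lborel_singleton[of v]
        by eventually_elim (auto simp: ind_def)
    qed
    also have "\<dots> = ennreal (v powr (t - 1 + 1) / (t - 1 + 1))"
      using has_integral_powr_from_0[of "t - 1" v] t v
      by (intro nn_integral_has_integral_lebesgue') auto
    also have "\<dots> = ennreal (1/t) * ennreal (v powr t)"
      using t by (simp add: ennreal_mult[symmetric])
    finally show ?thesis .
  qed
  have "(\<integral>\<^sup>+a. ennreal (a powr (t - 1)) * (\<integral>\<^sup>+x. ind a (f x) \<partial>lborel) \<partial>lborel)
      = (\<integral>\<^sup>+a. \<integral>\<^sup>+x. ennreal (a powr (t - 1)) * ind a (f x) \<partial>lborel \<partial>lborel)"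
    by (simp add: nn_integral_cmult)
  also have "\<dots> = (\<integral>\<^sup>+x. \<integral>\<^sup>+a. ennreal (a powr (t - 1)) * ind a (f x) \<partial>lborel \<partial>lborel)"
    by (rule swap_int) measurable
  also have "\<dots> = (\<integral>\<^sup>+x. ennreal (1/t) * ennreal (f x powr t) \<partial>lborel)"
    using inner nn by simp
  also have "\<dots> = ennreal (1 / t) * (\<integral>\<^sup>+x. ennreal (f x powr t) \<partial>lborel)"
    by (simp add: nn_integral_cmult)
  finally show ?thesis .
qed

lemma LCc:
  fixes P :: ennreal and Q k :: real
  assumes k: "1 < k" and Q: "0 \<le> Q"
  shows "(\<integral>\<^sup>+c. indicator {0<..} c * min P (ennreal (Q * c powr (-k))) \<partial>lborel)
     \<le> ennreal (k/(k-1)) * epow P (1 - 1/k) * ennreal (Q powr (1/k))"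
proof (cases "Q = 0 \<or> P = 0")
  case True
  then have "(\<lambda>c. indicator {0<..} c * min P (ennreal (Q * c powr (-k)))) = (\<lambda>c. 0)"
    by (auto simp: fun_eq_iff)
  then show ?thesis by simp
next
  case False
  then have Qp: "0 < Q" and Pp: "0 < P" using Q by (auto simp: zero_less_iff_neq_zero)
  show ?thesis
  proof (cases "P = top")
    case True
    have "ennreal (k/(k-1)) * epow P (1 - 1/k) * ennreal (Q powr (1/k)) = top"
      using True k Qp by (simp add: ennreal_mult_eq_top_iff)
    then show ?thesis by simp
  next
    case False
    then obtain p where p: "P = ennreal p" "0 < p" using Pp
      by (metis ennreal_cases ennreal_less_zero_iff le_less top.not_eq_extremum)
    define c0 where "c0 = (Q / p) powr (1/k)"
    have c0: "0 < c0" using Qp p by (simp add: c0_def)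
    have "(\<integral>\<^sup>+c. indicator {0<..} c * min P (ennreal (Q * c powr (-k))) \<partial>lborel)
        \<le> (\<integral>\<^sup>+c. ennreal p * indicator {0..c0} c + ennreal (Q * c powr (-k)) * indicator {c0..} c \<partial>lborel)"
    proof (intro nn_integral_mono)
      fix c :: real
      show "indicator {0<..} c * min P (ennreal (Q * c powr (-k)))
          \<le> ennreal p * indicator {0..c0} c + ennreal (Q * c powr (-k)) * indicator {c0..} c"
        using p by (cases "c \<le> c0") (auto simp: indicator_def min_le_iff_disj)
    qed
    also have "\<dots> = ennreal p * (\<integral>\<^sup>+c. indicator {0..c0} c \<partial>lborel) + (\<integral>\<^sup>+c. ennreal (Q * c powr (-k)) * indicator {c0..} c \<partial>lborel)"
      by (simp add: nn_integral_add nn_integral_cmult)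
    also have "(\<integral>\<^sup>+c. ennreal (Q * c powr (-k)) * indicator {c0..} c \<partial>lborel) = ennreal (Q * (- (c0 powr (-k + 1)) / (-k + 1)))"
    proof (rule nn_integral_has_integral_lebesgue')
      show "\<And>x. x \<in> {c0..} \<Longrightarrow> 0 \<le> Q * x powr - k" using Qp by simp
      show "((\<lambda>x. Q * x powr - k) has_integral Q * (- (c0 powr (- k + 1)) / (- k + 1))) {c0..}"
        using has_integral_powr_to_inf[of "-k" c0] k c0 by (intro has_integral_mult_right) auto
    qed
    also have "(\<integral>\<^sup>+c. indicator {0..c0} c \<partial>lborel) = ennreal c0" using c0 by simp
    finally have le0: "(\<integral>\<^sup>+c. indicator {0<..} c * min P (ennreal (Q * c powr (-k))) \<partial>lborel)
        \<le> ennreal p * ennreal c0 + ennreal (Q * (- (c0 powr (-k + 1)) / (-k + 1)))" .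
    have nn2: "0 \<le> Q * (- (c0 powr (-k + 1)) / (-k + 1))"
      using k Qp by (intro mult_nonneg_nonneg divide_nonpos_neg) auto
    have "ennreal p * ennreal c0 + ennreal (Q * (- (c0 powr (-k + 1)) / (-k + 1)))
        = ennreal (p * c0 + Q * (- (c0 powr (-k + 1)) / (-k + 1)))"
      using p c0 by (subst ennreal_plus[OF _ nn2]) (simp_all add: ennreal_mult)
    with le0 have le: "(\<integral>\<^sup>+c. indicator {0<..} c * min P (ennreal (Q * c powr (-k))) \<partial>lborel)
        \<le> ennreal (p * c0 + Q * (- (c0 powr (-k + 1)) / (-k + 1)))" by simp
    have A: "p * c0 = p powr (1 - 1/k) * Q powr (1/k)"
    proof -
      have c0': "c0 = Q powr (1/k) / p powr (1/k)" using p Qp by (simp add: c0_def powr_divide)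
      have pp: "p = p powr (1/k) * p powr (1 - 1/k)" using p by (simp add: powr_add[symmetric])
      have "p * c0 = p powr (1/k) * p powr (1 - 1/k) * (Q powr (1/k) / p powr (1/k))"
        using pp c0' by simp
      also have "\<dots> = p powr (1 - 1/k) * Q powr (1/k)" using p by simp
      finally show ?thesis .
    qed
    have B: "Q * (- (c0 powr (-k + 1)) / (-k + 1)) = 1/(k-1) * (p powr (1 - 1/k) * Q powr (1/k))"
    proof -
      have e: "(1/k) * (-k + 1) = 1/k - 1" using k by (simp add: field_simps)
      have "c0 powr (-k + 1) = (Q / p) powr (1/k - 1)"
        unfolding c0_def powr_powr e ..
      also have "\<dots> = Q powr (1/k - 1) / p powr (1/k - 1)" using p Qp by (simp add: powr_divide)
      also have "1 / p powr (1/k - 1) = p powr (1 - 1/k)"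
        using p by (simp add: powr_minus_divide[symmetric])
      then have "Q powr (1/k - 1) / p powr (1/k - 1) = Q powr (1/k - 1) * p powr (1 - 1/k)"
        by (metis times_divide_eq_right mult.right_neutral)
      finally have c: "c0 powr (-k + 1) = Q powr (1/k - 1) * p powr (1 - 1/k)" .
      have q: "Q * Q powr (1/k - 1) = Q powr (1/k)"
      proof -
        have "Q powr (1/k) = Q powr (1 + (1/k - 1))" by simp
        also have "\<dots> = Q powr 1 * Q powr (1/k - 1)" by (rule powr_add)
        finally show ?thesis using Qp by simp
      qed
      have "Q * (- (c0 powr (-k + 1)) / (-k + 1)) = (Q * c0 powr (-k + 1)) / (-(-k + 1))"
        by (simp only: minus_divide_right[symmetric] minus_divide_left[symmetric] mult_minus_right) simp
      also have "-(-k + 1) = k - 1" by simp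
      finally have "Q * (- (c0 powr (-k + 1)) / (-k + 1)) = (Q * c0 powr (-k + 1)) / (k - 1)" .
      also have "\<dots> = (Q * Q powr (1/k - 1)) * p powr (1 - 1/k) / (k - 1)"
        unfolding c by (simp add: mult.assoc)
      also have "\<dots> = 1/(k-1) * (p powr (1 - 1/k) * Q powr (1/k))"
        unfolding q by simp
      finally show ?thesis .
    qed
    have "p * c0 + Q * (- (c0 powr (-k + 1)) / (-k + 1)) = k/(k-1) * (p powr (1 - 1/k) * Q powr (1/k))"
      unfolding A B using k by (simp add: field_simps)
    also have "ennreal \<dots> = ennreal (k/(k-1)) * epow P (1 - 1/k) * ennreal (Q powr (1/k))"
      using p k by (simp add: epow_ennreal ennreal_mult[symmetric] mult.assoc del: ennreal_mult')
    finally show ?thesis using le by simp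
  qed
qed

lemma nn_translate:
  fixes h :: "'a::euclidean_space \<Rightarrow> ennreal"
  assumes [measurable]: "h \<in> borel_measurable borel"
  shows "(\<integral>\<^sup>+y. h (c + y) \<partial>lborel) = (\<integral>\<^sup>+y. h y \<partial>lborel)"
proof -
  have "(\<integral>\<^sup>+y. h y \<partial>lborel) = (\<integral>\<^sup>+y. h y \<partial>distr lborel borel ((+) c))"
    by (simp add: lborel_distr_plus)
  also have "\<dots> = (\<integral>\<^sup>+y. h (c + y) \<partial>lborel)"
    by (subst nn_integral_distr) auto
  finally show ?thesis ..
qed

definition omega :: "'a::euclidean_space itself \<Rightarrow> real" where
  "omega _ = enn2real (emeasure lborel (ball (0::'a) 1))"

lemma omega_eq: "emeasure lborel (ball (0::'a::euclidean_space) 1) = ennreal (omega TYPE('a))"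
  unfolding omega_def using emeasure_lborel_ball_finite[of "0::'a" 1]
  by (simp add: ennreal_enn2real_if)

lemma omega_nn: "0 \<le> omega TYPE('a::euclidean_space)"
  by (simp add: omega_def)

lemma V_bound:
  fixes l c :: real
  assumes l: "0 < l" and c: "0 < c"
  shows "(\<integral>\<^sup>+y. ind c (norm (y::'a::euclidean_space) powr (-l)) \<partial>lborel)
     \<le> ennreal (omega TYPE('a) * c powr (- (DIM('a) / l)))"
proof -
  define \<rho> where "\<rho> = c powr (-1/l)"
  have \<rho>: "0 < \<rho>" using c by (simp add: \<rho>_def)
  have "(\<integral>\<^sup>+y. ind c (norm (y::'a) powr (-l)) \<partial>lborel) \<le> (\<integral>\<^sup>+y. indicator (ball 0 \<rho>) (y::'a) \<partial>lborel)"
  proof (intro nn_integral_mono)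
    fix y :: 'a
    show "ind c (norm y powr (-l)) \<le> indicator (ball 0 \<rho>) y"
    proof (cases "c < norm y powr (-l)")
      case True
      then have y0: "y \<noteq> 0" using c by auto
      have "(norm y powr (-l)) powr (-1/l) < c powr (-1/l)"
        using True c l by (intro powr_less_mono2_neg) auto
      then have "norm y < \<rho>" using l y0 by (simp add: powr_powr \<rho>_def)
      then show ?thesis by (simp add: indicator_def ind_le1)
    next
      case False then show ?thesis by (simp add: ind_def)
    qed
  qed
  also have "\<dots> = ennreal (\<rho> ^ DIM('a)) * ennreal (omega TYPE('a))"
    using \<rho> by (simp add: ball_measure omega_eq)
  also have "\<rho> ^ DIM('a) = c powr (- (DIM('a) / l))"
    using c by (simp add: \<rho>_def powr_realpow[symmetric] powr_powr)
  finally show ?thesis using c by (simp add: ennreal_mult[symmetric] mult.commute omega_nn)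
qed

lemma V_translate:
  fixes x :: "'a::euclidean_space"
  shows "(\<integral>\<^sup>+y. ind c (norm (x - y) powr (-l)) \<partial>lborel) = (\<integral>\<^sup>+y. ind c (norm (y::'a) powr (-l)) \<partial>lborel)"
proof -
  have "(\<integral>\<^sup>+y. ind c (norm (x - y) powr (-l)) \<partial>lborel) = (\<integral>\<^sup>+y. ind c (norm ((-x) + y) powr (-l)) \<partial>lborel)"
    by (simp add: norm_minus_commute)
  also have "\<dots> = (\<integral>\<^sup>+y. ind c (norm (y::'a) powr (-l)) \<partial>lborel)"
  proof -
    have m: "(\<lambda>y::'a. ind c (norm y powr (-l))) \<in> borel_measurable borel" by measurable
    show ?thesis using nn_translate[OF m, of "-x"] by simp
  qed
  finally show ?thesis .
qed

definition Jf :: "('a::euclidean_space \<Rightarrow> real) \<Rightarrow> ('a \<Rightarrow> real) \<Rightarrow> real \<Rightarrow> real \<Rightarrow> real \<Rightarrow> real \<Rightarrow> ennreal" where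
  "Jf f g l a b c = (\<integral>\<^sup>+x. \<integral>\<^sup>+y. ind a (f x) * ind b (g y) * ind c (norm (x - y) powr (-l)) \<partial>lborel \<partial>lborel)"

definition Dist :: "('a::euclidean_space \<Rightarrow> real) \<Rightarrow> real \<Rightarrow> ennreal" where
  "Dist f a = (\<integral>\<^sup>+x. ind a (f x) \<partial>lborel)"

lemma J_le1:
  assumes [measurable]: "f \<in> borel_measurable lborel" "g \<in> borel_measurable lborel"
  shows "Jf f g l a b c \<le> Dist f a * Dist g b"
proof -
  have "Jf f g l a b c \<le> (\<integral>\<^sup>+x. \<integral>\<^sup>+y. ind a (f x) * ind b (g y) \<partial>lborel \<partial>lborel)"
    unfolding Jf_def
    by (intro nn_integral_mono) (auto intro!: mult_right_le_one_le simp: ind_le1 ind_def)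
  also have "\<dots> = Dist f a * Dist g b"
    by (simp add: Dist_def nn_integral_cmult nn_integral_multc)
  finally show ?thesis .
qed

lemma J_le2:
  fixes f g :: "'a::euclidean_space \<Rightarrow> real"
  assumes [measurable]: "f \<in> borel_measurable lborel" "g \<in> borel_measurable lborel"
  shows "Jf f g l a b c \<le> Dist f a * (\<integral>\<^sup>+y. ind c (norm (y::'a) powr (-l)) \<partial>lborel)"
proof -
  have "Jf f g l a b c \<le> (\<integral>\<^sup>+x. ind a (f x) * \<integral>\<^sup>+y. ind c (norm (x - y) powr (-l)) \<partial>lborel \<partial>lborel)"
    unfolding Jf_def
    by (intro nn_integral_mono) (auto simp: nn_integral_cmult[symmetric] mult.assoc
           intro!: nn_integral_mono mult_left_mono ind_mult_le)
  also have "\<dots> = (\<integral>\<^sup>+x. ind a (f x) * \<integral>\<^sup>+y. ind c (norm (y::'a) powr (-l)) \<partial>lborel \<partial>lborel)"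
    by (simp add: V_translate)
  also have "\<dots> = Dist f a * (\<integral>\<^sup>+y. ind c (norm (y::'a) powr (-l)) \<partial>lborel)"
    by (simp add: Dist_def nn_integral_multc)
  finally show ?thesis .
qed

lemma Jf_nonpos: "c \<le> 0 \<Longrightarrow> Jf f g l a b c = 0"
  by (simp add: Jf_def ind_def)

lemma J_cint:
  fixes f g :: "'a::euclidean_space \<Rightarrow> real" and l :: real
  assumes [measurable]: "f \<in> borel_measurable lborel" "g \<in> borel_measurable lborel"
    and l: "0 < l" "l < DIM('a)"
  defines "k \<equiv> DIM('a) / l"
  shows "(\<integral>\<^sup>+c. Jf f g l a b c \<partial>lborel)
     \<le> Dist f a * (ennreal (k/(k-1) * omega TYPE('a) powr (1/k)) * epow (Dist g b) (1 - 1/k))"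
proof -
  have k: "1 < k" using l by (simp add: k_def)
  have "(\<integral>\<^sup>+c. Jf f g l a b c \<partial>lborel)
      \<le> (\<integral>\<^sup>+c. Dist f a * (indicator {0<..} c * min (Dist g b) (ennreal (omega TYPE('a) * c powr (-k)))) \<partial>lborel)"
  proof (intro nn_integral_mono)
    fix c :: real
    show "Jf f g l a b c \<le> Dist f a * (indicator {0<..} c * min (Dist g b) (ennreal (omega TYPE('a) * c powr (-k))))"
    proof (cases "0 < c")
      case True
      have j1: "Jf f g l a b c \<le> Dist f a * Dist g b" by (rule J_le1) auto
      have "Jf f g l a b c \<le> Dist f a * (\<integral>\<^sup>+y. ind c (norm (y::'a) powr (-l)) \<partial>lborel)"
        by (rule J_le2) auto
      also have "\<dots> \<le> Dist f a * ennreal (omega TYPE('a) * c powr (-k))"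
        using V_bound[OF l(1) True] by (intro mult_left_mono) (auto simp: k_def)
      finally have j2: "Jf f g l a b c \<le> Dist f a * ennreal (omega TYPE('a) * c powr (-k))" .
      show ?thesis using True j1 j2 by (cases "Dist g b \<le> ennreal (omega TYPE('a) * c powr (-k))") (auto simp: min_def)
    next
      case False then show ?thesis by (simp add: Jf_nonpos)
    qed
  qed
  also have "\<dots> = Dist f a * (\<integral>\<^sup>+c. indicator {0<..} c * min (Dist g b) (ennreal (omega TYPE('a) * c powr (-k))) \<partial>lborel)"
    by (simp add: nn_integral_cmult)
  also have "\<dots> \<le> Dist f a * (ennreal (k/(k-1)) * epow (Dist g b) (1 - 1/k) * ennreal ((omega TYPE('a)) powr (1/k)))"
    by (intro mult_left_mono LCc k omega_nn) auto
  also have "\<dots> = Dist f a * (ennreal (k/(k-1) * omega TYPE('a) powr (1/k)) * epow (Dist g b) (1 - 1/k))"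
  proof -
    have "ennreal (k/(k-1) * omega TYPE('a) powr (1/k)) = ennreal (k/(k-1)) * ennreal (omega TYPE('a) powr (1/k))"
      using k by (intro ennreal_mult) auto
    then show ?thesis by (simp add: mult_ac)
  qed
  finally show ?thesis .
qed

lemma LB_point:
  fixes G e \<epsilon> b \<theta> s :: real
  assumes G: "0 \<le> G" and b: "0 < b" and \<epsilon>: "0 < \<epsilon>" and \<theta>: "0 < \<theta>" "\<theta> < 1"
    and e: "e = (s - 1) * (1 - \<theta>) / \<theta>"
  shows "G powr (1 - \<theta>) \<le> (1 - \<theta>) * (\<epsilon> * b powr (s - 1) * G) + \<theta> * (\<epsilon> powr (-(1-\<theta>)/\<theta>) * b powr (-e))"
proof -
  define u where "u = \<epsilon> * b powr (s - 1) * G"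
  define v where "v = \<epsilon> powr (-(1-\<theta>)/\<theta>) * b powr (-e)"
  have "u powr (1 - \<theta>) = \<epsilon> powr (1 - \<theta>) * b powr ((s - 1) * (1 - \<theta>)) * G powr (1 - \<theta>)"
    using G b \<epsilon> by (simp add: u_def powr_mult powr_powr)
  moreover have "v powr \<theta> = \<epsilon> powr (-(1-\<theta>)) * b powr (-((s - 1) * (1 - \<theta>)))"
    using b \<epsilon> \<theta> by (simp add: v_def powr_mult powr_powr e)
  ultimately have "u powr (1 - \<theta>) * v powr \<theta> = (\<epsilon> powr (1 - \<theta>) * \<epsilon> powr (-(1-\<theta>))) * (b powr ((s - 1) * (1 - \<theta>)) * b powr (-((s - 1) * (1 - \<theta>)))) * G powr (1 - \<theta>)"
    by (simp add: mult_ac)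
  also have "\<dots> = G powr (1 - \<theta>)"
    using b \<epsilon> by (simp add: powr_add[symmetric])
  finally have eq: "u powr (1 - \<theta>) * v powr \<theta> = G powr (1 - \<theta>)" .
  have "u powr (1 - \<theta>) * v powr \<theta> * 1 powr 0 \<le> (1 - \<theta>) * u + \<theta> * v + 0 * 1"
    using G b \<epsilon> \<theta> by (intro amgm3) (auto simp: u_def v_def)
  then show ?thesis using eq by (simp add: u_def v_def)
qed

lemma LB:
  fixes G :: "real \<Rightarrow> ennreal" and s \<theta> B :: real
  assumes G [measurable]: "G \<in> borel_measurable lborel"
    and G0: "\<And>b. b \<le> 0 \<Longrightarrow> G b = 0"
    and M: "(\<integral>\<^sup>+b. ennreal (b powr (s - 1)) * G b \<partial>lborel) \<le> ennreal (1/s)"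
    and s: "1 < s" and \<theta>: "0 < \<theta>" "\<theta> < 1" and s\<theta>: "s * (1 - \<theta>) < 1" and B: "0 \<le> B"
  defines "e \<equiv> (s - 1) * (1 - \<theta>) / \<theta>"
  shows "(\<integral>\<^sup>+b. indicator {..B} b * epow (G b) (1 - \<theta>) \<partial>lborel)
     \<le> ennreal (((1-\<theta>)/s + \<theta>/(1-e)) * B powr (1 - s*(1-\<theta>)))"
proof -
  have e1: "e < 1"
  proof -
    have "(s - 1) * (1 - \<theta>) < \<theta>" using s\<theta> by (simp add: algebra_simps)
    then show ?thesis using \<theta> by (simp add: e_def)
  qed
  have e0: "0 \<le> e" using s \<theta> by (simp add: e_def)
  show ?thesis
  proof (cases "B = 0")
    case True
    have "(\<lambda>b. indicator {..B} b * epow (G b) (1 - \<theta>)) = (\<lambda>b. 0)"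
      using True G0 by (auto simp: fun_eq_iff indicator_def)
    then show ?thesis by simp
  next
    case False
    then have Bp: "0 < B" using B by simp
    define \<mu> where "\<mu> = 1 - s*(1-\<theta>)"
    define \<epsilon> where "\<epsilon> = B powr \<mu>"
    have \<epsilon>: "0 < \<epsilon>" using Bp by (simp add: \<epsilon>_def)
    have "(\<integral>\<^sup>+b. indicator {..B} b * epow (G b) (1 - \<theta>) \<partial>lborel)
      \<le> (\<integral>\<^sup>+b. ennreal ((1-\<theta>)*\<epsilon>) * (ennreal (b powr (s - 1)) * G b)
            + ennreal (\<theta> * \<epsilon> powr (-(1-\<theta>)/\<theta>)) * (ennreal (b powr (-e)) * indicator {0..B} b) \<partial>lborel)"
    proof (intro nn_integral_mono)
      fix b :: real
      show "indicator {..B} b * epow (G b) (1 - \<theta>)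
         \<le> ennreal ((1-\<theta>)*\<epsilon>) * (ennreal (b powr (s - 1)) * G b)
            + ennreal (\<theta> * \<epsilon> powr (-(1-\<theta>)/\<theta>)) * (ennreal (b powr (-e)) * indicator {0..B} b)"
      proof (cases "0 < b \<and> b \<le> B")
        case False
        then show ?thesis using G0[of b] by (auto simp: indicator_def)
      next
        case True
        then have b: "0 < b" "b \<le> B" by auto
        show ?thesis
        proof (cases "G b = top")
          case True
          have "ennreal ((1-\<theta>)*\<epsilon>) * (ennreal (b powr (s - 1)) * G b) = top"
            using True b \<epsilon> \<theta> by (simp add: ennreal_mult_eq_top_iff)
          then show ?thesis by simp
        next
          case False
          then obtain g where g: "G b = ennreal g" "0 \<le> g"
            by (cases "G b") auto
          have "g powr (1 - \<theta>) \<le> (1 - \<theta>) * (\<epsilon> * b powr (s - 1) * g) + \<theta> * (\<epsilon> powr (-(1-\<theta>)/\<theta>) * b powr (-e))"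
            by (rule LB_point[OF g(2) b(1) \<epsilon> \<theta>]) (simp add: e_def)
          then have "ennreal (g powr (1 - \<theta>)) \<le> ennreal ((1 - \<theta>) * (\<epsilon> * b powr (s - 1) * g) + \<theta> * (\<epsilon> powr (-(1-\<theta>)/\<theta>) * b powr (-e)))"
            by (rule ennreal_leI)
          also have "\<dots> = ennreal ((1-\<theta>)*\<epsilon>) * (ennreal (b powr (s - 1)) * ennreal g)
            + ennreal (\<theta> * \<epsilon> powr (-(1-\<theta>)/\<theta>)) * (ennreal (b powr (-e)) * 1)"
            using g \<theta> \<epsilon> b by (simp add: ennreal_mult[symmetric] ennreal_plus[symmetric] mult_ac del: ennreal_plus)
          finally show ?thesis using g b by (simp add: epow_ennreal indicator_def)
        qed
      qed
    qed
    also have "\<dots> = ennreal ((1-\<theta>)*\<epsilon>) * (\<integral>\<^sup>+b. ennreal (b powr (s - 1)) * G b \<partial>lborel)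
            + ennreal (\<theta> * \<epsilon> powr (-(1-\<theta>)/\<theta>)) * (\<integral>\<^sup>+b. ennreal (b powr (-e)) * indicator {0..B} b \<partial>lborel)"
      by (simp add: nn_integral_add nn_integral_cmult)
    also have "(\<integral>\<^sup>+b. ennreal (b powr (-e)) * indicator {0..B} b \<partial>lborel) = ennreal (B powr (-e + 1) / (-e + 1))"
      using has_integral_powr_from_0[of "-e" B] e1 B by (intro nn_integral_has_integral_lebesgue') auto
    also have "ennreal ((1-\<theta>)*\<epsilon>) * (\<integral>\<^sup>+b. ennreal (b powr (s - 1)) * G b \<partial>lborel) \<le> ennreal ((1-\<theta>)*\<epsilon>) * ennreal (1/s)"
      by (intro mult_left_mono M) auto
    also have "ennreal ((1-\<theta>)*\<epsilon>) * ennreal (1/s) + ennreal (\<theta> * \<epsilon> powr (-(1-\<theta>)/\<theta>)) * ennreal (B powr (-e + 1) / (-e + 1))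
       = ennreal ((1-\<theta>)*\<epsilon> / s + \<theta> * \<epsilon> powr (-(1-\<theta>)/\<theta>) * (B powr (-e + 1) / (-e + 1)))"
      using \<theta> \<epsilon> e1 s by (simp add: ennreal_mult[symmetric] ennreal_plus[symmetric] del: ennreal_plus)
    also have "\<epsilon> powr (-(1-\<theta>)/\<theta>) * B powr (-e + 1) = B powr \<mu>"
    proof -
      have "\<mu> = \<theta> * (1 - e)" using \<theta> by (simp add: \<mu>_def e_def field_simps)
      then have "\<mu> * (-(1-\<theta>)/\<theta>) + (-e + 1) = \<mu>" using \<theta> by (simp add: field_simps)
      then show ?thesis using Bp by (simp add: \<epsilon>_def powr_powr powr_add[symmetric])
    qed
    then have "(1-\<theta>)*\<epsilon> / s + \<theta> * \<epsilon> powr (-(1-\<theta>)/\<theta>) * (B powr (-e + 1) / (-e + 1))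
        = ((1-\<theta>)/s + \<theta>/(1-e)) * B powr (1 - s*(1-\<theta>))"
      using e1 by (simp add: \<epsilon>_def \<mu>_def field_simps)
    finally show ?thesis by simp
  qed
qed

lemma Dist_nonpos: "a \<le> 0 \<Longrightarrow> Dist f a = 0"
  by (simp add: Dist_def ind_def)

lemma Dist_meas[measurable]:
  fixes f :: "'a::euclidean_space \<Rightarrow> real"
  assumes [measurable]: "f \<in> borel_measurable lborel"
  shows "Dist f \<in> borel_measurable lborel"
  unfolding Dist_def by measurable

lemma Jf_meas[measurable]:
  fixes f g :: "'a::euclidean_space \<Rightarrow> real"
  assumes [measurable]: "f \<in> borel_measurable lborel" "g \<in> borel_measurable lborel"
  shows "(\<lambda>(a, b, c). Jf f g l a b c) \<in> borel_measurable (lborel \<Otimes>\<^sub>M (lborel \<Otimes>\<^sub>M lborel))"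
  unfolding Jf_def by measurable

lemma Jf_meas2[measurable]:
  fixes f g :: "'a::euclidean_space \<Rightarrow> real"
  assumes [measurable]: "f \<in> borel_measurable lborel" "g \<in> borel_measurable lborel"
    and [measurable]: "A \<in> borel_measurable M" "B \<in> borel_measurable M" "C \<in> borel_measurable M"
  shows "(\<lambda>x. Jf f g l (A x) (B x) (C x)) \<in> borel_measurable M"
  unfolding Jf_def by measurable

lemma Jf_meas3[measurable]:
  fixes f g :: "'a::euclidean_space \<Rightarrow> real"
  assumes [measurable]: "f \<in> borel_measurable lborel" "g \<in> borel_measurable lborel"
    and [measurable]: "A \<in> borel_measurable M" "B \<in> borel_measurable M"
  shows "(\<lambda>x. integral\<^sup>N lborel (Jf f g l (A x) (B x))) \<in> borel_measurable M"
proof -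
  have "(\<lambda>(x, c). Jf f g l (A x) (B x) c) \<in> borel_measurable (M \<Otimes>\<^sub>M lborel)"
    by measurable
  from lborel.borel_measurable_nn_integral[OF this] show ?thesis by simp
qed

lemma indicator_atMost_meas[measurable]:
  fixes A B :: "'x \<Rightarrow> real"
  assumes [measurable]: "A \<in> borel_measurable M" "B \<in> borel_measurable M"
  shows "(\<lambda>x. indicator {..B x} (A x) :: ennreal) \<in> borel_measurable M"
proof -
  have "(\<lambda>x. indicator {..B x} (A x) :: ennreal) = (\<lambda>x. if A x \<le> B x then 1 else 0)"
    by (auto simp: indicator_def fun_eq_iff)
  also have "\<dots> \<in> borel_measurable M" by measurable
  finally show ?thesis .
qed

lemma Half:
  fixes f g :: "'a::euclidean_space \<Rightarrow> real" and l \<tau> s :: real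
  assumes [measurable]: "f \<in> borel_measurable lborel" "g \<in> borel_measurable lborel"
    and nnf: "\<And>x. 0 \<le> f x" and nng: "\<And>x. 0 \<le> g x"
    and nf: "(\<integral>\<^sup>+x. ennreal (f x powr \<tau>) \<partial>lborel) \<le> 1"
    and ng: "(\<integral>\<^sup>+x. ennreal (g x powr s) \<partial>lborel) \<le> 1"
    and \<tau>: "1 < \<tau>" and s: "1 < s" and l: "0 < l" "l < DIM('a)"
    and rel: "1/\<tau> + 1/s = 2 - l / DIM('a)"
  defines "\<theta> \<equiv> l / DIM('a)"
  defines "CH \<equiv> (1/\<theta>)/(1/\<theta>-1) * omega TYPE('a) powr \<theta> * ((1-\<theta>)/s + \<theta>/(1-(s - 1) * (1 - \<theta>) / \<theta>)) / \<tau>"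
  shows "(\<integral>\<^sup>+a. \<integral>\<^sup>+b. indicator {..a powr (\<tau>/s)} b * (\<integral>\<^sup>+c. Jf f g l a b c \<partial>lborel) \<partial>lborel \<partial>lborel)
      \<le> ennreal CH"
proof -
  define k where "k = DIM('a) / l"
  have k1: "1/k = \<theta>" by (simp add: k_def \<theta>_def)
  have \<theta>: "0 < \<theta>" "\<theta> < 1" using l by (auto simp: \<theta>_def)
  have k: "1 < k" using l by (simp add: k_def)
  define Ck where "Ck = k/(k-1) * omega TYPE('a) powr (1/k)"
  have Ck: "0 \<le> Ck" using k by (simp add: Ck_def)
  define e where "e = (s - 1) * (1 - \<theta>) / \<theta>"
  define C1 where "C1 = (1-\<theta>)/s + \<theta>/(1-e)"
  have s\<theta>: "s * (1 - \<theta>) < 1"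
  proof -
    have "1 - \<theta> = 1/\<tau> + 1/s - 1" using rel by (simp add: \<theta>_def)
    then have "s * (1 - \<theta>) = s/\<tau> + 1 - s" using s by (simp add: field_simps)
    moreover have "s / \<tau> < s" using s \<tau> by (simp add: divide_less_eq)
    ultimately show ?thesis by simp
  qed
  have e1: "e < 1"
  proof -
    have "(s - 1) * (1 - \<theta>) < \<theta>" using s\<theta> by (simp add: algebra_simps)
    then show ?thesis using \<theta> by (simp add: e_def)
  qed
  have C1: "0 \<le> C1" using \<theta> s e1 by (simp add: C1_def)
  have Mg: "(\<integral>\<^sup>+b. ennreal (b powr (s - 1)) * Dist g b \<partial>lborel) \<le> ennreal (1/s)"
  proof -
    have "(\<integral>\<^sup>+b. ennreal (b powr (s - 1)) * Dist g b \<partial>lborel) = ennreal (1/s) * (\<integral>\<^sup>+x. ennreal (g x powr s) \<partial>lborel)"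
      unfolding Dist_def using s by (intro moment nng) auto
    also have "\<dots> \<le> ennreal (1/s) * 1" by (intro mult_left_mono ng) auto
    finally show ?thesis by simp
  qed
  have pw: "(\<integral>\<^sup>+b. indicator {..a powr (\<tau>/s)} b * (\<integral>\<^sup>+c. Jf f g l a b c \<partial>lborel) \<partial>lborel)
      \<le> ennreal (Ck * C1) * (ennreal (a powr (\<tau> - 1)) * Dist f a)" for a
  proof (cases "0 < a")
    case False
    then have "\<And>b c. Jf f g l a b c = 0" by (simp add: Jf_def ind_def)
    then show ?thesis by simp
  next
    case True
    have "(\<integral>\<^sup>+b. indicator {..a powr (\<tau>/s)} b * (\<integral>\<^sup>+c. Jf f g l a b c \<partial>lborel) \<partial>lborel)
      \<le> (\<integral>\<^sup>+b. indicator {..a powr (\<tau>/s)} b * (Dist f a * (ennreal Ck * epow (Dist g b) (1 - \<theta>))) \<partial>lborel)"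
      using J_cint[of f g l a] l k1 by (intro nn_integral_mono mult_left_mono) (auto simp: Ck_def k_def)
    also have "\<dots> = Dist f a * ennreal Ck * (\<integral>\<^sup>+b. indicator {..a powr (\<tau>/s)} b * epow (Dist g b) (1 - \<theta>) \<partial>lborel)"
      by (subst nn_integral_cmult[symmetric]) (auto simp: mult_ac)
    also have "\<dots> \<le> Dist f a * ennreal Ck * ennreal (C1 * (a powr (\<tau>/s)) powr (1 - s*(1-\<theta>)))"
      unfolding C1_def e_def
      by (intro mult_left_mono LB Mg s \<theta> s\<theta>) (auto simp: Dist_nonpos)
    also have "(a powr (\<tau>/s)) powr (1 - s*(1-\<theta>)) = a powr (\<tau> - 1)"
    proof -
      have "1 - \<theta> = 1/\<tau> + 1/s - 1" using rel by (simp add: \<theta>_def)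
      then have "\<tau>/s * (1 - s*(1-\<theta>)) = \<tau> - 1" using s \<tau> by (simp add: field_simps)
      then show ?thesis by (simp add: powr_powr)
    qed
    finally show ?thesis using Ck C1 by (simp add: ennreal_mult mult_ac)
  qed
  have "(\<integral>\<^sup>+a. \<integral>\<^sup>+b. indicator {..a powr (\<tau>/s)} b * (\<integral>\<^sup>+c. Jf f g l a b c \<partial>lborel) \<partial>lborel \<partial>lborel)
     \<le> (\<integral>\<^sup>+a. ennreal (Ck * C1) * (ennreal (a powr (\<tau> - 1)) * Dist f a) \<partial>lborel)"
    by (intro nn_integral_mono pw)
  also have "\<dots> = ennreal (Ck * C1) * (ennreal (1/\<tau>) * (\<integral>\<^sup>+x. ennreal (f x powr \<tau>) \<partial>lborel))"
    unfolding Dist_def using \<tau> by (subst nn_integral_cmult) (auto simp: moment nnf)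
  also have "\<dots> \<le> ennreal (Ck * C1) * (ennreal (1/\<tau>) * 1)"
    by (intro mult_left_mono nf) auto
  also have "\<dots> = ennreal (Ck * C1 * (1/\<tau>))"
    using Ck C1 \<tau> by (simp add: ennreal_mult[symmetric] del: ennreal_mult')
  also have "Ck * C1 * (1/\<tau>) = CH"
  proof -
    have kk: "k = 1/\<theta>" using k1 k by (metis divide_divide_eq_right mult_1 div_by_1 divide_self_if one_divide_one_divide_ennreal nonzero_divide_eq_eq divide_eq_0_iff zero_neq_one)
    show ?thesis unfolding CH_def Ck_def C1_def e_def kk by simp
  qed
  finally show ?thesis .
qed

lemma pull3:
  fixes h :: "'a::euclidean_space \<Rightarrow> 'b::euclidean_space \<Rightarrow> 'c::euclidean_space \<Rightarrow> ennreal"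
  assumes [measurable]: "(\<lambda>(x, y, a). h x y a) \<in> borel_measurable (lborel \<Otimes>\<^sub>M (lborel \<Otimes>\<^sub>M lborel))"
  shows "(\<integral>\<^sup>+x. \<integral>\<^sup>+y. \<integral>\<^sup>+a. h x y a \<partial>lborel \<partial>lborel \<partial>lborel)
       = (\<integral>\<^sup>+a. \<integral>\<^sup>+x. \<integral>\<^sup>+y. h x y a \<partial>lborel \<partial>lborel \<partial>lborel)"
proof -
  have m1: "(\<lambda>(y, a). h x y a) \<in> borel_measurable (lborel \<Otimes>\<^sub>M lborel)" for x
    by measurable
  have "(\<integral>\<^sup>+x. \<integral>\<^sup>+y. \<integral>\<^sup>+a. h x y a \<partial>lborel \<partial>lborel \<partial>lborel)
      = (\<integral>\<^sup>+x. \<integral>\<^sup>+a. \<integral>\<^sup>+y. h x y a \<partial>lborel \<partial>lborel \<partial>lborel)"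
    by (intro nn_integral_cong swap_int m1)
  also have "\<dots> = (\<integral>\<^sup>+a. \<integral>\<^sup>+x. \<integral>\<^sup>+y. h x y a \<partial>lborel \<partial>lborel \<partial>lborel)"
  proof (rule swap_int)
    have "(\<lambda>p. (fst (fst p), snd p, snd (fst p))) \<in> (lborel \<Otimes>\<^sub>M lborel) \<Otimes>\<^sub>M lborel \<rightarrow>\<^sub>M lborel \<Otimes>\<^sub>M (lborel \<Otimes>\<^sub>M (lborel :: 'c measure))"
      by measurable
    from measurable_comp[OF this assms]
    have "(\<lambda>p. h (fst (fst p)) (snd p) (snd (fst p))) \<in> borel_measurable ((lborel \<Otimes>\<^sub>M lborel) \<Otimes>\<^sub>M lborel)"
      by (simp add: comp_def case_prod_beta)
    then have "case_prod (\<lambda>xa y. h (fst xa) y (snd xa)) \<in> borel_measurable ((lborel \<Otimes>\<^sub>M lborel) \<Otimes>\<^sub>M lborel)"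
      by (simp add: case_prod_beta)
    from lborel.borel_measurable_nn_integral[OF this]
    show "(\<lambda>(x, a). \<integral>\<^sup>+y. h x y a \<partial>lborel) \<in> borel_measurable (lborel \<Otimes>\<^sub>M lborel)"
      by (simp add: case_prod_beta')
  qed
  finally show ?thesis .
qed

lemma T_layer:
  fixes f g :: "'a::euclidean_space \<Rightarrow> real" and l :: real
  assumes [measurable]: "f \<in> borel_measurable lborel" "g \<in> borel_measurable lborel"
    and nnf: "\<And>x. 0 \<le> f x" and nng: "\<And>x. 0 \<le> g x"
  shows "(\<integral>\<^sup>+x. \<integral>\<^sup>+y. ennreal (f x * g y * norm (x - y) powr (-l)) \<partial>lborel \<partial>lborel)
     = (\<integral>\<^sup>+a. \<integral>\<^sup>+b. \<integral>\<^sup>+c. Jf f g l a b c \<partial>lborel \<partial>lborel \<partial>lborel)"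
proof -
  have "(\<integral>\<^sup>+x. \<integral>\<^sup>+y. ennreal (f x * g y * norm (x - y) powr (-l)) \<partial>lborel \<partial>lborel)
      = (\<integral>\<^sup>+x. \<integral>\<^sup>+y. \<integral>\<^sup>+a. \<integral>\<^sup>+b. \<integral>\<^sup>+c. ind a (f x) * ind b (g y) * ind c (norm (x - y) powr (-l))
           \<partial>lborel \<partial>lborel \<partial>lborel \<partial>lborel \<partial>lborel)"
  proof (intro nn_integral_cong)
    fix x y :: 'a
    have "ennreal (f x * g y * norm (x - y) powr (-l))
        = (\<integral>\<^sup>+a. ind a (f x) \<partial>lborel) * (\<integral>\<^sup>+b. ind b (g y) \<partial>lborel) * (\<integral>\<^sup>+c. ind c (norm (x - y) powr (-l)) \<partial>lborel)"
      using nnf[of x] nng[of y] by (simp add: ind_int ennreal_mult)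
    also have "\<dots> = (\<integral>\<^sup>+a. \<integral>\<^sup>+b. \<integral>\<^sup>+c. ind a (f x) * ind b (g y) * ind c (norm (x - y) powr (-l)) \<partial>lborel \<partial>lborel \<partial>lborel)"
      by (simp add: nn_integral_cmult nn_integral_multc)
    finally show "ennreal (f x * g y * norm (x - y) powr (-l))
        = (\<integral>\<^sup>+a. \<integral>\<^sup>+b. \<integral>\<^sup>+c. ind a (f x) * ind b (g y) * ind c (norm (x - y) powr (-l)) \<partial>lborel \<partial>lborel \<partial>lborel)" .
  qed
  also have "\<dots> = (\<integral>\<^sup>+a. \<integral>\<^sup>+x. \<integral>\<^sup>+y. \<integral>\<^sup>+b. \<integral>\<^sup>+c. ind a (f x) * ind b (g y) * ind c (norm (x - y) powr (-l))
           \<partial>lborel \<partial>lborel \<partial>lborel \<partial>lborel \<partial>lborel)"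
    by (rule pull3[where h="\<lambda>x y a. \<integral>\<^sup>+b. \<integral>\<^sup>+c. ind a (f x) * ind b (g y) * ind c (norm (x - y) powr (-l)) \<partial>lborel \<partial>lborel"]) measurable
  also have "\<dots> = (\<integral>\<^sup>+a. \<integral>\<^sup>+b. \<integral>\<^sup>+x. \<integral>\<^sup>+y. \<integral>\<^sup>+c. ind a (f x) * ind b (g y) * ind c (norm (x - y) powr (-l))
           \<partial>lborel \<partial>lborel \<partial>lborel \<partial>lborel \<partial>lborel)"
    by (intro nn_integral_cong pull3[where h="\<lambda>x y b. \<integral>\<^sup>+c. ind a (f x) * ind b (g y) * ind c (norm (x - y) powr (-l)) \<partial>lborel" for a]) measurable
  also have "\<dots> = (\<integral>\<^sup>+a. \<integral>\<^sup>+b. \<integral>\<^sup>+c. \<integral>\<^sup>+x. \<integral>\<^sup>+y. ind a (f x) * ind b (g y) * ind c (norm (x - y) powr (-l))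
           \<partial>lborel \<partial>lborel \<partial>lborel \<partial>lborel \<partial>lborel)"
    by (intro nn_integral_cong pull3[where h="\<lambda>x y c. ind a (f x) * ind b (g y) * ind c (norm (x - y) powr (-l))" for a b]) measurable
  finally show ?thesis by (simp add: Jf_def)
qed

lemma Jf_sym:
  fixes f g :: "'a::euclidean_space \<Rightarrow> real"
  assumes [measurable]: "f \<in> borel_measurable lborel" "g \<in> borel_measurable lborel"
  shows "Jf f g l a b c = Jf g f l b a c"
proof -
  have "Jf f g l a b c = (\<integral>\<^sup>+y. \<integral>\<^sup>+x. ind a (f x) * ind b (g y) * ind c (norm (x - y) powr (-l)) \<partial>lborel \<partial>lborel)"
    unfolding Jf_def by (rule swap_int) measurable
  also have "\<dots> = Jf g f l b a c"
    unfolding Jf_def by (simp add: norm_minus_commute mult_ac)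
  finally show ?thesis .
qed

lemma region_cover:
  fixes a b \<tau> s :: real
  assumes "0 < \<tau>" "0 < s"
  shows "1 \<le> (indicator {..a powr (\<tau>/s)} b + indicator {..b powr (s/\<tau>)} a :: ennreal)"
proof (cases "a \<le> b powr (s/\<tau>)")
  case True then show ?thesis by (simp add: indicator_def)
next
  case False
  then have a: "0 < a" "b powr (s/\<tau>) < a" using powr_ge_zero[of b "s/\<tau>"] by linarith+
  have "b \<le> a powr (\<tau>/s)"
  proof (cases "0 < b")
    case True
    have "(b powr (s/\<tau>)) powr (\<tau>/s) < a powr (\<tau>/s)"
      using a assms True by (intro powr_less_mono2) auto
    then show ?thesis using True assms by (simp add: powr_powr)
  next
    case False
    then show ?thesis using powr_ge_zero[of a "\<tau>/s"] by linarith
  qed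
  then show ?thesis by (simp add: indicator_def)
qed

lemma bilin_norm:
  fixes f g :: "'a::euclidean_space \<Rightarrow> real" and l \<tau> s :: real
  assumes [measurable]: "f \<in> borel_measurable lborel" "g \<in> borel_measurable lborel"
    and nnf: "\<And>x. 0 \<le> f x" and nng: "\<And>x. 0 \<le> g x"
    and nf: "(\<integral>\<^sup>+x. ennreal (f x powr \<tau>) \<partial>lborel) \<le> 1"
    and ng: "(\<integral>\<^sup>+x. ennreal (g x powr s) \<partial>lborel) \<le> 1"
    and \<tau>: "1 < \<tau>" and s: "1 < s" and l: "0 < l" "l < DIM('a)"
    and rel: "1/\<tau> + 1/s = 2 - l / DIM('a)"
  defines "\<theta> \<equiv> l / DIM('a)"
  shows "(\<integral>\<^sup>+x. \<integral>\<^sup>+y. ennreal (f x * g y * norm (x - y) powr (-l)) \<partial>lborel \<partial>lborel)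
     \<le> ennreal ((1/\<theta>)/(1/\<theta>-1) * omega TYPE('a) powr \<theta> * ((1-\<theta>)/s + \<theta>/(1-(s - 1) * (1 - \<theta>) / \<theta>)) / \<tau>)
       + ennreal ((1/\<theta>)/(1/\<theta>-1) * omega TYPE('a) powr \<theta> * ((1-\<theta>)/\<tau> + \<theta>/(1-(\<tau> - 1) * (1 - \<theta>) / \<theta>)) / s)"
proof -
  have \<theta>: "0 < \<theta>" "\<theta> < 1" using l by (auto simp: \<theta>_def)
  let ?H1 = "\<lambda>a b. indicator {..a powr (\<tau>/s)} b * (\<integral>\<^sup>+c. Jf f g l a b c \<partial>lborel)"
  let ?H2 = "\<lambda>a b. indicator {..b powr (s/\<tau>)} a * (\<integral>\<^sup>+c. Jf f g l a b c \<partial>lborel)"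
  have "(\<integral>\<^sup>+x. \<integral>\<^sup>+y. ennreal (f x * g y * norm (x - y) powr (-l)) \<partial>lborel \<partial>lborel)
     = (\<integral>\<^sup>+a. \<integral>\<^sup>+b. \<integral>\<^sup>+c. Jf f g l a b c \<partial>lborel \<partial>lborel \<partial>lborel)"
    by (rule T_layer) (auto simp: nnf nng)
  also have "\<dots> \<le> (\<integral>\<^sup>+a. \<integral>\<^sup>+b. ?H1 a b + ?H2 a b \<partial>lborel \<partial>lborel)"
  proof (intro nn_integral_mono)
    fix a b :: real
    have "(\<integral>\<^sup>+c. Jf f g l a b c \<partial>lborel) = 1 * (\<integral>\<^sup>+c. Jf f g l a b c \<partial>lborel)" by simp
    also have "\<dots> \<le> (indicator {..a powr (\<tau>/s)} b + indicator {..b powr (s/\<tau>)} a) * (\<integral>\<^sup>+c. Jf f g l a b c \<partial>lborel)"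
      using \<tau> s by (intro mult_right_mono region_cover) auto
    finally show "(\<integral>\<^sup>+c. Jf f g l a b c \<partial>lborel) \<le> ?H1 a b + ?H2 a b"
      by (simp add: distrib_right)
  qed
  also have "\<dots> = (\<integral>\<^sup>+a. (\<integral>\<^sup>+b. ?H1 a b \<partial>lborel) + (\<integral>\<^sup>+b. ?H2 a b \<partial>lborel) \<partial>lborel)"
    by (intro nn_integral_cong nn_integral_add) measurable
  also have "\<dots> = (\<integral>\<^sup>+a. \<integral>\<^sup>+b. ?H1 a b \<partial>lborel \<partial>lborel) + (\<integral>\<^sup>+a. \<integral>\<^sup>+b. ?H2 a b \<partial>lborel \<partial>lborel)"
    by (rule nn_integral_add) measurable
  also have "(\<integral>\<^sup>+a. \<integral>\<^sup>+b. ?H2 a b \<partial>lborel \<partial>lborel)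
      = (\<integral>\<^sup>+b. \<integral>\<^sup>+a. indicator {..b powr (s/\<tau>)} a * (\<integral>\<^sup>+c. Jf g f l b a c \<partial>lborel) \<partial>lborel \<partial>lborel)"
  proof -
    have "Jf f g l a b = Jf g f l b a" for a b using Jf_sym[of f g] by (auto simp: fun_eq_iff)
    then show ?thesis by (subst swap_int) (auto simp: Jf_sym[of f g])
  qed
  also have "\<dots> \<le> ennreal ((1/\<theta>)/(1/\<theta>-1) * omega TYPE('a) powr \<theta> * ((1-\<theta>)/\<tau> + \<theta>/(1-(\<tau> - 1) * (1 - \<theta>) / \<theta>)) / s)"
    unfolding \<theta>_def by (rule Half) (use nnf nng nf ng \<tau> s l rel in auto)
  also have "(\<integral>\<^sup>+a. \<integral>\<^sup>+b. ?H1 a b \<partial>lborel \<partial>lborel)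
     \<le> ennreal ((1/\<theta>)/(1/\<theta>-1) * omega TYPE('a) powr \<theta> * ((1-\<theta>)/s + \<theta>/(1-(s - 1) * (1 - \<theta>) / \<theta>)) / \<tau>)"
    unfolding \<theta>_def by (rule Half) (use nnf nng nf ng \<tau> s l rel in auto)
  finally show ?thesis by (simp add: add_mono)
qed

definition Tb :: "real \<Rightarrow> ('a::euclidean_space \<Rightarrow> real) \<Rightarrow> ('a \<Rightarrow> real) \<Rightarrow> ennreal" where
  "Tb l f g = (\<integral>\<^sup>+x. \<integral>\<^sup>+y. ennreal (f x * g y * norm (x - y) powr (-l)) \<partial>lborel \<partial>lborel)"

lemma bilin_const:
  fixes l \<tau> s :: real
  assumes \<tau>: "1 < \<tau>" and s: "1 < s" and l: "0 < l" "l < DIM('a::euclidean_space)"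
    and rel: "1/\<tau> + 1/s = 2 - l / DIM('a)"
  shows "\<exists>C>0. \<forall>f g :: 'a \<Rightarrow> real. f \<in> borel_measurable lborel \<and> g \<in> borel_measurable lborel
     \<and> (\<forall>x. 0 \<le> f x) \<and> (\<forall>x. 0 \<le> g x) \<and> (\<integral>\<^sup>+x. ennreal (f x powr \<tau>) \<partial>lborel) \<le> 1
     \<and> (\<integral>\<^sup>+x. ennreal (g x powr s) \<partial>lborel) \<le> 1 \<longrightarrow> Tb l f g \<le> ennreal C"
proof -
  define \<theta> where "\<theta> = l / DIM('a)"
  define C1 where "C1 = (1/\<theta>)/(1/\<theta>-1) * omega TYPE('a) powr \<theta> * ((1-\<theta>)/s + \<theta>/(1-(s - 1) * (1 - \<theta>) / \<theta>)) / \<tau>"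
  define C2 where "C2 = (1/\<theta>)/(1/\<theta>-1) * omega TYPE('a) powr \<theta> * ((1-\<theta>)/\<tau> + \<theta>/(1-(\<tau> - 1) * (1 - \<theta>) / \<theta>)) / s"
  show ?thesis
  proof (intro exI[of _ "1 + max 0 C1 + max 0 C2"] conjI allI impI)
    fix f g :: "'a \<Rightarrow> real"
    assume H: "f \<in> borel_measurable lborel \<and> g \<in> borel_measurable lborel
     \<and> (\<forall>x. 0 \<le> f x) \<and> (\<forall>x. 0 \<le> g x) \<and> (\<integral>\<^sup>+x. ennreal (f x powr \<tau>) \<partial>lborel) \<le> 1
     \<and> (\<integral>\<^sup>+x. ennreal (g x powr s) \<partial>lborel) \<le> 1"
    have "Tb l f g \<le> ennreal C1 + ennreal C2"
      unfolding Tb_def C1_def C2_def \<theta>_def using H by (intro bilin_norm \<tau> s l rel) auto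
    also have "\<dots> \<le> ennreal (max 0 C1) + ennreal (max 0 C2)"
      by (intro add_mono ennreal_leI) auto
    also have "\<dots> \<le> ennreal (1 + max 0 C1 + max 0 C2)"
      by (simp add: ennreal_plus[symmetric] del: ennreal_plus)
    finally show "Tb l f g \<le> ennreal (1 + max 0 C1 + max 0 C2)" .
  qed auto
qed

lemma Tb_zero:
  fixes f g :: "'a::euclidean_space \<Rightarrow> real"
  assumes [measurable]: "f \<in> borel_measurable lborel" "g \<in> borel_measurable lborel"
    and nnf: "\<And>x. 0 \<le> f x" and nng: "\<And>x. 0 \<le> g x" and \<tau>: "0 < \<tau>" and s: "0 < s"
    and z: "(\<integral>\<^sup>+x. ennreal (f x powr \<tau>) \<partial>lborel) = 0 \<or> (\<integral>\<^sup>+x. ennreal (g x powr s) \<partial>lborel) = 0"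
  shows "Tb l f g = 0"
proof -
  have pz: "\<And>h :: 'a \<Rightarrow> real. \<And>t. 0 < t \<Longrightarrow> (\<And>x. 0 \<le> h x) \<Longrightarrow> h \<in> borel_measurable lborel \<Longrightarrow>
      (\<integral>\<^sup>+x. ennreal (h x powr t) \<partial>lborel) = 0 \<Longrightarrow> AE x in lborel. h x = 0"
  proof -
    fix h :: "'a \<Rightarrow> real" and t :: real
    assume t: "0 < t" and nn: "\<And>x. 0 \<le> h x" and [measurable]: "h \<in> borel_measurable lborel"
      and i: "(\<integral>\<^sup>+x. ennreal (h x powr t) \<partial>lborel) = 0"
    then have "AE x in lborel. ennreal (h x powr t) = 0" by (subst (asm) nn_integral_0_iff_AE) auto
    then show "AE x in lborel. h x = 0"
      by eventually_elim (use nn in \<open>auto simp: order.antisym\<close>)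
  qed
  from z show ?thesis
  proof
    assume "(\<integral>\<^sup>+x. ennreal (f x powr \<tau>) \<partial>lborel) = 0"
    then have "AE x in lborel. f x = 0" using pz[OF \<tau>] nnf by auto
    then have "AE x in lborel. (\<integral>\<^sup>+y. ennreal (f x * g y * norm (x - y) powr (-l)) \<partial>lborel) = 0"
      by eventually_elim simp
    then show ?thesis unfolding Tb_def by (simp add: nn_integral_0_iff_AE)
  next
    assume "(\<integral>\<^sup>+x. ennreal (g x powr s) \<partial>lborel) = 0"
    then have g0: "AE y in lborel. g y = 0" using pz[OF s] nng by auto
    have "(\<integral>\<^sup>+y. ennreal (f x * g y * norm (x - y) powr (-l)) \<partial>lborel) = 0" for x
      using g0 by (subst nn_integral_0_iff_AE) (auto elim!: eventually_mono)
    then show ?thesis unfolding Tb_def by simp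
  qed
qed

lemma bilin_gen:
  fixes l \<tau> s :: real
  assumes \<tau>: "1 < \<tau>" and s: "1 < s" and l: "0 < l" "l < DIM('a::euclidean_space)"
    and rel: "1/\<tau> + 1/s = 2 - l / DIM('a)"
  shows "\<exists>C>0. \<forall>f g :: 'a \<Rightarrow> real. f \<in> borel_measurable lborel \<and> g \<in> borel_measurable lborel
     \<and> (\<forall>x. 0 \<le> f x) \<and> (\<forall>x. 0 \<le> g x) \<longrightarrow>
     Tb l f g \<le> ennreal C * epow (\<integral>\<^sup>+x. ennreal (f x powr \<tau>) \<partial>lborel) (1/\<tau>) * epow (\<integral>\<^sup>+x. ennreal (g x powr s) \<partial>lborel) (1/s)"
proof -
  obtain C where C: "C > 0" and HC: "\<And>f g :: 'a \<Rightarrow> real. f \<in> borel_measurable lborel \<Longrightarrow> g \<in> borel_measurable lborel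
     \<Longrightarrow> (\<forall>x. 0 \<le> f x) \<Longrightarrow> (\<forall>x. 0 \<le> g x) \<Longrightarrow> (\<integral>\<^sup>+x. ennreal (f x powr \<tau>) \<partial>lborel) \<le> 1
     \<Longrightarrow> (\<integral>\<^sup>+x. ennreal (g x powr s) \<partial>lborel) \<le> 1 \<Longrightarrow> Tb l f g \<le> ennreal C"
    using bilin_const[OF \<tau> s l rel] by blast
  show ?thesis
  proof (intro exI[of _ C] conjI allI impI C)
    fix f g :: "'a \<Rightarrow> real"
    assume H: "f \<in> borel_measurable lborel \<and> g \<in> borel_measurable lborel \<and> (\<forall>x. 0 \<le> f x) \<and> (\<forall>x. 0 \<le> g x)"
    then have [measurable]: "f \<in> borel_measurable lborel" "g \<in> borel_measurable lborel"
      and nnf: "\<And>x. 0 \<le> f x" and nng: "\<And>x. 0 \<le> g x" by auto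
    define A where "A = (\<integral>\<^sup>+x. ennreal (f x powr \<tau>) \<partial>lborel)"
    define B where "B = (\<integral>\<^sup>+x. ennreal (g x powr s) \<partial>lborel)"
    show "Tb l f g \<le> ennreal C * epow A (1/\<tau>) * epow B (1/s)"
    proof (cases "A = 0 \<or> B = 0")
      case True
      then have "Tb l f g = 0" using \<tau> s by (intro Tb_zero) (auto simp: A_def B_def nnf nng)
      then show ?thesis by simp
    next
      case False
      then have A0: "A \<noteq> 0" and B0: "B \<noteq> 0" by auto
      show ?thesis
      proof (cases "A = top \<or> B = top")
        case True
        then have "ennreal C * epow A (1/\<tau>) * epow B (1/s) = top"
          using A0 B0 C by (auto simp: ennreal_mult_eq_top_iff epow_eq_top_iff epow_eq_0_iff)
        then show ?thesis by simp
      next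
        case False
        then obtain A' B' where AB: "A = ennreal A'" "B = ennreal B'" "0 < A'" "0 < B'"
          using A0 B0 by (metis ennreal_cases ennreal_less_zero_iff le_less top.not_eq_extremum zero_less_iff_neq_zero)
        define \<alpha> where "\<alpha> = A' powr (1/\<tau>)"
        define \<beta> where "\<beta> = B' powr (1/s)"
        have \<alpha>: "0 < \<alpha>" and \<beta>: "0 < \<beta>" using AB by (auto simp: \<alpha>_def \<beta>_def)
        define f' where "f' x = f x / \<alpha>" for x
        define g' where "g' x = g x / \<beta>" for x
        have nf: "(\<integral>\<^sup>+x. ennreal (f' x powr \<tau>) \<partial>lborel) \<le> 1"
        proof -
          have "(\<integral>\<^sup>+x. ennreal (f' x powr \<tau>) \<partial>lborel) = (\<integral>\<^sup>+x. ennreal (f x powr \<tau>) * ennreal (1 / A') \<partial>lborel)"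
          proof (intro nn_integral_cong)
            fix x
            have "f' x powr \<tau> = f x powr \<tau> / \<alpha> powr \<tau>" using nnf[of x] \<alpha> by (simp add: f'_def powr_divide)
            also have "\<alpha> powr \<tau> = A'" using AB \<tau> by (simp add: \<alpha>_def powr_powr)
            finally show "ennreal (f' x powr \<tau>) = ennreal (f x powr \<tau>) * ennreal (1 / A')"
              using AB by (simp add: ennreal_mult[symmetric] del: ennreal_mult')
          qed
          also have "\<dots> = A * ennreal (1 / A')" by (simp add: A_def nn_integral_multc)
          also have "\<dots> = 1" using AB by (simp add: ennreal_mult[symmetric] del: ennreal_mult')
          finally show ?thesis by simp
        qed
        have ng: "(\<integral>\<^sup>+x. ennreal (g' x powr s) \<partial>lborel) \<le> 1"
        proof -
          have "(\<integral>\<^sup>+x. ennreal (g' x powr s) \<partial>lborel) = (\<integral>\<^sup>+x. ennreal (g x powr s) * ennreal (1 / B') \<partial>lborel)"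
          proof (intro nn_integral_cong)
            fix x
            have "g' x powr s = g x powr s / \<beta> powr s" using nng[of x] \<beta> by (simp add: g'_def powr_divide)
            also have "\<beta> powr s = B'" using AB s by (simp add: \<beta>_def powr_powr)
            finally show "ennreal (g' x powr s) = ennreal (g x powr s) * ennreal (1 / B')"
              using AB by (simp add: ennreal_mult[symmetric] del: ennreal_mult')
          qed
          also have "\<dots> = B * ennreal (1 / B')" by (simp add: B_def nn_integral_multc)
          also have "\<dots> = 1" using AB by (simp add: ennreal_mult[symmetric] del: ennreal_mult')
          finally show ?thesis by simp
        qed
        have "Tb l f g = ennreal (\<alpha> * \<beta>) * Tb l f' g'"
        proof -
          have "Tb l f g = (\<integral>\<^sup>+x. \<integral>\<^sup>+y. ennreal (\<alpha> * \<beta>) * ennreal (f' x * g' y * norm (x - y) powr (-l)) \<partial>lborel \<partial>lborel)"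
            unfolding Tb_def
          proof (intro nn_integral_cong)
            fix x y :: 'a
            show "ennreal (f x * g y * norm (x - y) powr (-l)) = ennreal (\<alpha> * \<beta>) * ennreal (f' x * g' y * norm (x - y) powr (-l))"
              using \<alpha> \<beta> nnf[of x] nng[of y] by (simp add: ennreal_mult[symmetric] f'_def g'_def del: ennreal_mult')
          qed
          also have "\<dots> = ennreal (\<alpha> * \<beta>) * Tb l f' g'"
            unfolding Tb_def f'_def g'_def by (simp add: nn_integral_cmult)
          finally show ?thesis .
        qed
        also have "\<dots> \<le> ennreal (\<alpha> * \<beta>) * ennreal C"
        proof -
          have [measurable]: "f' \<in> borel_measurable lborel" "g' \<in> borel_measurable lborel"
            unfolding f'_def[abs_def] g'_def[abs_def] by measurable
          show ?thesis using nf ng nnf nng \<alpha> \<beta> by (intro mult_left_mono HC) (auto simp: f'_def g'_def)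
        qed
        also have "\<dots> = ennreal C * epow A (1/\<tau>) * epow B (1/s)"
          using AB \<alpha> \<beta> C by (simp add: epow_ennreal \<alpha>_def \<beta>_def ennreal_mult[symmetric] mult_ac del: ennreal_mult')
        finally show ?thesis .
      qed
    qed
  qed
qed



definition trunc :: "nat \<Rightarrow> ('a::euclidean_space \<Rightarrow> ennreal) \<Rightarrow> 'a \<Rightarrow> real" where
  "trunc N P x = indicator (ball 0 (real N)) x * enn2real (min (P x) (of_nat N))"

lemma trunc_nn: "0 \<le> trunc N P x"
  by (simp add: trunc_def)

lemma trunc_le_N: "trunc N P x \<le> real N"
proof -
  have "enn2real (min (P x) (of_nat N)) \<le> enn2real (of_nat N)"
    by (intro enn2real_mono) (auto simp: of_nat_less_top)
  then show ?thesis by (auto simp: trunc_def indicator_def)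
qed

lemma trunc_le_P: "ennreal (trunc N P x) \<le> P x"
proof -
  have "ennreal (trunc N P x) \<le> ennreal (enn2real (min (P x) (of_nat N)))"
    by (auto simp: trunc_def indicator_def)
  also have "\<dots> = min (P x) (of_nat N)"
    by (intro ennreal_enn2real) (auto simp: min_def of_nat_less_top intro: le_less_trans[OF _ of_nat_less_top])
  also have "\<dots> \<le> P x" by simp
  finally show ?thesis .
qed

lemma trunc_mono: "N \<le> M \<Longrightarrow> trunc N P x \<le> trunc M P x"
proof -
  assume NM: "N \<le> M"
  have i: "indicator (ball 0 (real N)) x \<le> (indicator (ball 0 (real M)) x :: real)"
    using NM by (auto simp: indicator_def)
  have "enn2real (min (P x) (of_nat N)) \<le> enn2real (min (P x) (of_nat M))"
    using NM by (intro enn2real_mono)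
      (auto simp: min_def of_nat_less_top intro: le_less_trans[OF _ of_nat_less_top] order_trans[of _ "of_nat N" "of_nat M"])
  with i show ?thesis unfolding trunc_def
    by (intro mult_mono) auto
qed

lemma trunc_meas[measurable]:
  assumes [measurable]: "P \<in> borel_measurable lborel"
  shows "trunc N P \<in> borel_measurable lborel"
proof -
  have i: "(indicator (ball 0 (real N)) :: 'a \<Rightarrow> real) \<in> borel_measurable lborel"
    by (intro borel_measurable_indicator) auto
  have "(\<lambda>x. min (P x) (of_nat N)) = (\<lambda>x. if P x \<le> of_nat N then P x else of_nat N)"
    by (auto simp: min_def fun_eq_iff)
  moreover have "(\<lambda>x. if P x \<le> of_nat N then P x else of_nat N) \<in> borel_measurable lborel"
    by measurable
  ultimately have "(\<lambda>x. enn2real (min (P x) (of_nat N))) \<in> borel_measurable lborel"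
    by simp
  with i show ?thesis unfolding trunc_def[abs_def] by measurable
qed

lemma SUP_trunc_point:
  fixes P :: "'a::euclidean_space \<Rightarrow> ennreal"
  assumes p: "1 \<le> p"
  shows "(SUP N. ennreal (trunc N P x powr p)) = epow (P x) p"
proof (rule antisym)
  show "(SUP N. ennreal (trunc N P x powr p)) \<le> epow (P x) p"
  proof (rule SUP_least)
    fix N
    have "ennreal (trunc N P x powr p) = epow (ennreal (trunc N P x)) p"
      by (simp add: epow_ennreal trunc_nn)
    also have "\<dots> \<le> epow (P x) p" using p by (intro epow_mono trunc_le_P) auto
    finally show "ennreal (trunc N P x powr p) \<le> epow (P x) p" .
  qed
next
  obtain n0 :: nat where n0: "norm x < real n0" using reals_Archimedean2 by blast
  have tN: "trunc N P x = enn2real (min (P x) (of_nat N))" if "n0 \<le> N" for N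
    using that n0 by (auto simp: trunc_def indicator_def)
  show "epow (P x) p \<le> (SUP N. ennreal (trunc N P x powr p))"
  proof (cases "P x = top")
    case True
    have "of_nat n \<le> (SUP N. ennreal (trunc N P x powr p))" for n
    proof -
      define N where "N = max n (max n0 1)"
      have "trunc N P x = real N" using tN[of N] True by (simp add: N_def)
      then have "ennreal (trunc N P x powr p) = ennreal (real N powr p)" by simp
      have N1: "1 \<le> real N" by (simp add: N_def)
      have "real N \<le> real N powr p"
        using powr_mono[OF p N1] N1 by simp
      then have "ennreal (real N) \<le> ennreal (real N powr p)" by (rule ennreal_leI)
      moreover have "of_nat n \<le> ennreal (real N)" by (simp add: N_def ennreal_of_nat_eq_real_of_nat[symmetric])
      ultimately have "of_nat n \<le> ennreal (trunc N P x powr p)"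
        using \<open>ennreal (trunc N P x powr p) = ennreal (real N powr p)\<close> by (metis order_trans)
      also have "\<dots> \<le> (SUP N. ennreal (trunc N P x powr p))" by (rule SUP_upper) auto
      finally show ?thesis .
    qed
    then have "(SUP n. of_nat n :: ennreal) \<le> (SUP N. ennreal (trunc N P x powr p))"
      by (intro SUP_least) auto
    then show ?thesis using True by (simp add: ennreal_SUP_of_nat_eq_top)
  next
    case False
    then obtain v where v: "P x = ennreal v" "0 \<le> v" by (cases "P x") auto
    obtain n1 :: nat where n1: "v < real n1" using reals_Archimedean2 by blast
    define N where "N = max n0 n1"
    have "trunc N P x = v"
      using tN[of N] v n1 by (auto simp: N_def min_def ennreal_of_nat_eq_real_of_nat)
    then have "epow (P x) p = ennreal (trunc N P x powr p)" using v by (simp add: epow_ennreal)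
    also have "\<dots> \<le> (SUP N. ennreal (trunc N P x powr p))" by (rule SUP_upper) auto
    finally show ?thesis .
  qed
qed

lemma SUP_trunc:
  fixes P :: "'a::euclidean_space \<Rightarrow> ennreal"
  assumes p: "1 \<le> p" and [measurable]: "P \<in> borel_measurable lborel"
  shows "(\<integral>\<^sup>+x. epow (P x) p \<partial>lborel) = (SUP N. \<integral>\<^sup>+x. ennreal (trunc N P x powr p) \<partial>lborel)"
proof -
  have "(\<integral>\<^sup>+x. epow (P x) p \<partial>lborel) = (\<integral>\<^sup>+x. (SUP N. ennreal (trunc N P x powr p)) \<partial>lborel)"
    by (intro nn_integral_cong) (rule SUP_trunc_point[OF p, symmetric])
  also have "\<dots> = (SUP N. \<integral>\<^sup>+x. ennreal (trunc N P x powr p) \<partial>lborel)"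
  proof (rule nn_integral_monotone_convergence_SUP)
    show "incseq (\<lambda>N x. ennreal (trunc N P x powr p))"
      using p by (auto simp: incseq_def le_fun_def intro!: ennreal_leI powr_mono2 trunc_mono trunc_nn)
  qed measurable
  finally show ?thesis .
qed

lemma absorb:
  fixes S K :: ennreal and p :: real
  assumes p: "1 < p" and S: "S < top" and le: "S \<le> K * epow S (1 - 1/p)"
  shows "S \<le> epow K p"
proof (cases "S = 0")
  case True then show ?thesis by simp
next
  case False
  then obtain S' where S': "S = ennreal S'" "0 < S'" using S
    by (cases S) (auto simp: zero_less_iff_neq_zero)
  show ?thesis
  proof (cases "K = top")
    case True then show ?thesis by simp
  next
    case False
    then obtain K' where K': "K = ennreal K'" "0 \<le> K'" by (cases K) auto
    have "S' \<le> K' * S' powr (1 - 1/p)"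
      using le S' K' by (simp add: epow_ennreal ennreal_mult[symmetric] del: ennreal_mult')
    then have "S' / S' powr (1 - 1/p) \<le> K'"
      using S' by (simp add: divide_le_eq)
    moreover have "S' / S' powr (1 - 1/p) = S' powr (1/p)"
    proof -
      have "S' powr (1/p) = S' powr (1 - (1 - 1/p))" by simp
      also have "\<dots> = S' powr 1 / S' powr (1 - 1/p)" by (rule powr_diff)
      finally show ?thesis using S' by simp
    qed
    ultimately have "S' powr (1/p) \<le> K'" by simp
    then have "(S' powr (1/p)) powr p \<le> K' powr p"
      using p S' by (intro powr_mono2) auto
    then have "S' \<le> K' powr p" using p S' by (simp add: powr_powr)
    then show ?thesis using S' K' by (simp add: epow_ennreal)
  qed
qed

lemma HLS:
  fixes l \<tau> p :: real
  assumes \<tau>: "1 < \<tau>" and p: "\<tau> < p" and l: "0 < l" "l < DIM('a::euclidean_space)"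
    and rel: "1/\<tau> - 1/p = 1 - l / DIM('a)"
  shows "\<exists>C>0. \<forall>f :: 'a \<Rightarrow> real. f \<in> borel_measurable lborel \<and> (\<forall>x. 0 \<le> f x) \<longrightarrow>
     (\<integral>\<^sup>+x. epow (\<integral>\<^sup>+y. ennreal (f y * norm (x - y) powr (-l)) \<partial>lborel) p \<partial>lborel)
       \<le> ennreal C * epow (\<integral>\<^sup>+x. ennreal (f x powr \<tau>) \<partial>lborel) (p/\<tau>)"
proof -
  have p1: "1 < p" using \<tau> p by simp
  define s where "s = p / (p - 1)"
  have s1: "1 < s" using p1 by (simp add: s_def)
  have s_inv: "1/s = 1 - 1/p" using p1 by (simp add: s_def field_simps)
  have rel': "1/s + 1/\<tau> = 2 - l / DIM('a)" using rel s_inv by simp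
  have ps: "(p - 1) * s = p" using p1 by (simp add: s_def)
  obtain C where C: "C > 0" and HC: "\<And>f g :: 'a \<Rightarrow> real. f \<in> borel_measurable lborel \<and> g \<in> borel_measurable lborel
     \<and> (\<forall>x. 0 \<le> f x) \<and> (\<forall>x. 0 \<le> g x) \<Longrightarrow>
     Tb l f g \<le> ennreal C * epow (\<integral>\<^sup>+x. ennreal (f x powr s) \<partial>lborel) (1/s) * epow (\<integral>\<^sup>+x. ennreal (g x powr \<tau>) \<partial>lborel) (1/\<tau>)"
    using bilin_gen[OF s1 \<tau> l rel'] by blast
  show ?thesis
  proof (intro exI[of _ "C powr p"] conjI allI impI)
    show "0 < C powr p" using C by simp
    fix f :: "'a \<Rightarrow> real"
    assume H: "f \<in> borel_measurable lborel \<and> (\<forall>x. 0 \<le> f x)"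
    then have [measurable]: "f \<in> borel_measurable lborel" and nnf: "\<And>x. 0 \<le> f x" by auto
    define A where "A = (\<integral>\<^sup>+x. ennreal (f x powr \<tau>) \<partial>lborel)"
    define P where "P x = (\<integral>\<^sup>+y. ennreal (f y * norm (x - y) powr (-l)) \<partial>lborel)" for x :: 'a
    have Pm[measurable]: "P \<in> borel_measurable lborel" unfolding P_def[abs_def] by measurable
    have SN: "(\<integral>\<^sup>+x. ennreal (trunc N P x powr p) \<partial>lborel) \<le> ennreal (C powr p) * epow A (p/\<tau>)" for N
    proof -
      define h where "h = trunc N P"
      have hm[measurable]: "h \<in> borel_measurable lborel" unfolding h_def by measurable
      have hnn: "\<And>x. 0 \<le> h x" by (simp add: h_def trunc_nn)
      define S where "S = (\<integral>\<^sup>+x. ennreal (h x powr p) \<partial>lborel)"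
      have Sfin: "S < top"
      proof -
        have "S \<le> (\<integral>\<^sup>+x. ennreal (real N powr p) * indicator (ball 0 (real N)) (x::'a) \<partial>lborel)"
          unfolding S_def
        proof (intro nn_integral_mono)
          fix x :: 'a
          show "ennreal (h x powr p) \<le> ennreal (real N powr p) * indicator (ball 0 (real N)) x"
          proof (cases "x \<in> ball 0 (real N)")
            case True
            have "h x powr p \<le> real N powr p"
              using p1 by (intro powr_mono2) (auto simp: h_def trunc_nn trunc_le_N)
            then show ?thesis using True by (simp add: ennreal_leI)
          next
            case False then show ?thesis by (simp add: h_def trunc_def)
          qed
        qed
        also have "\<dots> = ennreal (real N powr p) * emeasure lborel (ball (0::'a) (real N))"
          by (subst nn_integral_cmult) (auto intro!: borel_measurable_indicator)
        also have "\<dots> < top"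
          using emeasure_lborel_ball_finite[of "0::'a" "real N"] by (simp add: ennreal_mult_less_top)
        finally show ?thesis .
      qed
      define g where "g x = h x powr (p - 1)" for x
      have gm[measurable]: "g \<in> borel_measurable lborel" unfolding g_def[abs_def] by measurable
      have gnn: "\<And>x. 0 \<le> g x" by (simp add: g_def)
      have gs: "(\<integral>\<^sup>+x. ennreal (g x powr s) \<partial>lborel) = S"
        unfolding S_def g_def using hnn by (simp add: powr_powr ps)
      have "S \<le> Tb l g f"
      proof -
        have "S = (\<integral>\<^sup>+x. ennreal (g x) * ennreal (h x) \<partial>lborel)"
          unfolding S_def
        proof (intro nn_integral_cong)
          fix x
          have "h x powr p = g x * h x"
          proof (cases "h x = 0")
            case True then show ?thesis using p1 by (simp add: g_def)
          next
            case False
            then have "0 < h x" using hnn[of x] by simp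
            then show ?thesis unfolding g_def using powr_add[of "h x" "p - 1" 1] by simp
          qed
          then show "ennreal (h x powr p) = ennreal (g x) * ennreal (h x)"
            using gnn[of x] hnn[of x] by (simp add: ennreal_mult[symmetric] del: ennreal_mult')
        qed
        also have "\<dots> \<le> (\<integral>\<^sup>+x. ennreal (g x) * P x \<partial>lborel)"
          by (intro nn_integral_mono mult_left_mono) (auto simp: h_def trunc_le_P)
        also have "\<dots> = Tb l g f"
          unfolding Tb_def P_def
          using gnn nnf by (simp add: nn_integral_cmult[symmetric] ennreal_mult[symmetric] mult.assoc del: ennreal_mult')
        finally show ?thesis .
      qed
      also have "Tb l g f \<le> ennreal C * epow S (1/s) * epow A (1/\<tau>)"
        using HC[of g f] gs gnn nnf unfolding A_def by auto
      finally have "S \<le> (ennreal C * epow A (1/\<tau>)) * epow S (1 - 1/p)"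
        by (simp add: s_inv mult_ac)
      then have "S \<le> epow (ennreal C * epow A (1/\<tau>)) p"
        by (intro absorb p1 Sfin)
      also have "\<dots> = ennreal (C powr p) * epow A (p/\<tau>)"
        using C by (simp add: epow_mult epow_epow epow_ennreal)
      finally show ?thesis unfolding S_def h_def .
    qed
    have "(\<integral>\<^sup>+x. epow (P x) p \<partial>lborel) = (SUP N. \<integral>\<^sup>+x. ennreal (trunc N P x powr p) \<partial>lborel)"
      using p1 by (intro SUP_trunc) auto
    also have "\<dots> \<le> ennreal (C powr p) * epow A (p/\<tau>)"
      by (intro SUP_least SN)
    finally show "(\<integral>\<^sup>+x. epow (\<integral>\<^sup>+y. ennreal (f y * norm (x - y) powr (-l)) \<partial>lborel) p \<partial>lborel)
       \<le> ennreal (C powr p) * epow (\<integral>\<^sup>+x. ennreal (f x powr \<tau>) \<partial>lborel) (p/\<tau>)"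
      unfolding P_def A_def .
  qed
qed



definition kc :: "real \<Rightarrow> real" where
  "kc e = enn2real (\<integral>\<^sup>+v. ennreal (sqrt (1 + v\<^sup>2) powr (-e)) \<partial>lborel)"

lemma kc_fin:
  assumes e: "1 < e"
  shows "(\<integral>\<^sup>+v. ennreal (sqrt (1 + v\<^sup>2) powr (-e)) \<partial>lborel) < top"
proof -
  have half: "(\<integral>\<^sup>+v. ennreal (v powr (-e)) * indicator {1..} v \<partial>lborel) = ennreal (- (1 powr (-e + 1)) / (-e + 1))"
    using has_integral_powr_to_inf[of "-e" 1] e by (intro nn_integral_has_integral_lebesgue') auto
  have half2: "(\<integral>\<^sup>+v. ennreal ((-v) powr (-e)) * indicator {1..} (-v) \<partial>lborel) = ennreal (- (1 powr (-e + 1)) / (-e + 1))"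
  proof -
    have "(\<integral>\<^sup>+v. ennreal (v powr (-e)) * indicator {1..} v \<partial>lborel)
        = ennreal \<bar>-1\<bar> * (\<integral>\<^sup>+v. ennreal ((0 + (-1) * v) powr (-e)) * indicator {1..} (0 + (-1) * v) \<partial>lborel)"
    proof -
      have m: "(\<lambda>v. ennreal (v powr (-e)) * indicator {1..} v) \<in> borel_measurable borel" by measurable
      show ?thesis using nn_integral_real_affine[OF m, of "-1" 0] by simp
    qed
    then show ?thesis using half by simp
  qed
  have "(\<integral>\<^sup>+v. ennreal (sqrt (1 + v\<^sup>2) powr (-e)) \<partial>lborel)
     \<le> (\<integral>\<^sup>+v. indicator {-1..1} v + (ennreal (v powr (-e)) * indicator {1..} v + ennreal ((-v) powr (-e)) * indicator {1..} (-v)) \<partial>lborel)"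
  proof (intro nn_integral_mono)
    fix v :: real
    have s1: "1 \<le> sqrt (1 + v\<^sup>2)" by simp
    show "ennreal (sqrt (1 + v\<^sup>2) powr (-e)) \<le> indicator {-1..1} v + (ennreal (v powr (-e)) * indicator {1..} v + ennreal ((-v) powr (-e)) * indicator {1..} (-v))"
    proof (cases "\<bar>v\<bar> \<le> 1")
      case True
      have "1 \<le> sqrt (1 + v\<^sup>2) powr e" by (rule ge_one_powr_ge_zero) (use s1 e in auto)
      then have "sqrt (1 + v\<^sup>2) powr (-e) \<le> 1"
        by (simp add: powr_minus_divide divide_le_eq_1)
      then have "ennreal (sqrt (1 + v\<^sup>2) powr (-e)) \<le> indicator {-1..1} v"
        using True by (auto simp: indicator_def abs_le_iff)
      then show ?thesis by (rule order_trans) simp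
    next
      case False
      have sv: "\<bar>v\<bar> \<le> sqrt (1 + v\<^sup>2)" by (simp add: real_le_rsqrt)
      have "sqrt (1 + v\<^sup>2) powr (-e) \<le> \<bar>v\<bar> powr (-e)"
        using False e sv by (intro powr_mono2') auto
      show ?thesis
      proof (cases "0 \<le> v")
        case True
        then have "ennreal (sqrt (1 + v\<^sup>2) powr (-e)) \<le> ennreal (v powr (-e)) * indicator {1..} v"
          using False \<open>sqrt (1 + v\<^sup>2) powr (-e) \<le> \<bar>v\<bar> powr (-e)\<close> by (simp add: indicator_def ennreal_leI)
        also have "\<dots> \<le> indicator {-1..1} v + (ennreal (v powr (-e)) * indicator {1..} v + ennreal ((-v) powr (-e)) * indicator {1..} (-v))"
          by (simp add: add_increasing add_increasing2)
        finally show ?thesis .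
      next
        case False2: False
        then have "ennreal (sqrt (1 + v\<^sup>2) powr (-e)) \<le> ennreal ((-v) powr (-e)) * indicator {1..} (-v)"
          using False \<open>sqrt (1 + v\<^sup>2) powr (-e) \<le> \<bar>v\<bar> powr (-e)\<close> by (simp add: indicator_def ennreal_leI)
        also have "\<dots> \<le> indicator {-1..1} v + (ennreal (v powr (-e)) * indicator {1..} v + ennreal ((-v) powr (-e)) * indicator {1..} (-v))"
          by (simp add: add_increasing add_increasing2)
        finally show ?thesis .
      qed
    qed
  qed
  also have "\<dots> = emeasure lborel {-1..1::real} + ((\<integral>\<^sup>+v. ennreal (v powr (-e)) * indicator {1..} v \<partial>lborel) + (\<integral>\<^sup>+v. ennreal ((-v) powr (-e)) * indicator {1..} (-v) \<partial>lborel))"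
  proof -
    have a1: "(\<integral>\<^sup>+v. ennreal (v powr (-e)) * indicator {1..} v + ennreal ((-v) powr (-e)) * indicator {1..} (-v) \<partial>lborel)
       = (\<integral>\<^sup>+v. ennreal (v powr (-e)) * indicator {1..} v \<partial>lborel) + (\<integral>\<^sup>+v. ennreal ((-v) powr (-e)) * indicator {1..} (-v) \<partial>lborel)"
      by (rule nn_integral_add) measurable
    have a2: "(\<integral>\<^sup>+v. indicator {-1..1} v + (ennreal (v powr (-e)) * indicator {1..} v + ennreal ((-v) powr (-e)) * indicator {1..} (-v)) \<partial>lborel)
       = (\<integral>\<^sup>+v. indicator {-1..1::real} v \<partial>lborel) + (\<integral>\<^sup>+v. ennreal (v powr (-e)) * indicator {1..} v + ennreal ((-v) powr (-e)) * indicator {1..} (-v) \<partial>lborel)"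
      by (rule nn_integral_add) measurable
    show ?thesis unfolding a2 a1 by simp
  qed
  also have "\<dots> < top" unfolding half half2 by simp
  finally show ?thesis .
qed

lemma kc_pos:
  assumes e: "1 < e"
  shows "0 < kc e"
proof -
  have "(\<integral>\<^sup>+v. ennreal (sqrt 2 powr (-e)) * indicator {0..1} (v::real) \<partial>lborel) \<le> (\<integral>\<^sup>+v. ennreal (sqrt (1 + v\<^sup>2) powr (-e)) \<partial>lborel)"
  proof (intro nn_integral_mono)
    fix v :: real
    show "ennreal (sqrt 2 powr (-e)) * indicator {0..1} v \<le> ennreal (sqrt (1 + v\<^sup>2) powr (-e))"
    proof (cases "v \<in> {0..1}")
      case True
      then have "v\<^sup>2 \<le> 1" by (simp add: power_le_one)
      then have "sqrt (1 + v\<^sup>2) \<le> sqrt 2" by simp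
      then have "sqrt 2 powr (-e) \<le> sqrt (1 + v\<^sup>2) powr (-e)"
        using e by (intro powr_mono2') (auto intro: add_pos_nonneg)
      then show ?thesis using True by (simp add: ennreal_leI)
    qed simp
  qed
  then have "0 < (\<integral>\<^sup>+v. ennreal (sqrt (1 + v\<^sup>2) powr (-e)) \<partial>lborel)"
    by (rule less_le_trans[rotated]) (simp add: nn_integral_cmult)
  then show ?thesis using kc_fin[OF e] by (simp add: kc_def enn2real_positive_iff)
qed

lemma K1:
  assumes e: "1 < e" and \<rho>: "0 < \<rho>"
  shows "(\<integral>\<^sup>+u. ennreal (sqrt (\<rho>\<^sup>2 + (c - u)\<^sup>2) powr (-e)) \<partial>lborel) = ennreal (kc e * \<rho> powr (1 - e))"
proof -
  have "(\<integral>\<^sup>+u. ennreal (sqrt (\<rho>\<^sup>2 + (c - u)\<^sup>2) powr (-e)) \<partial>lborel)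
      = ennreal \<bar>\<rho>\<bar> * (\<integral>\<^sup>+v. ennreal (sqrt (\<rho>\<^sup>2 + (c - (c + \<rho> * v))\<^sup>2) powr (-e)) \<partial>lborel)"
  proof -
    have m: "(\<lambda>u. ennreal (sqrt (\<rho>\<^sup>2 + (c - u)\<^sup>2) powr (-e))) \<in> borel_measurable borel" by measurable
    show ?thesis using nn_integral_real_affine[OF m, of \<rho> c] \<rho> by simp
  qed
  also have "(\<lambda>v. ennreal (sqrt (\<rho>\<^sup>2 + (c - (c + \<rho> * v))\<^sup>2) powr (-e)))
      = (\<lambda>v. ennreal (\<rho> powr (-e)) * ennreal (sqrt (1 + v\<^sup>2) powr (-e)))"
  proof
    fix v
    have "sqrt (\<rho>\<^sup>2 + (c - (c + \<rho> * v))\<^sup>2) = \<rho> * sqrt (1 + v\<^sup>2)"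
    proof -
      have "\<rho>\<^sup>2 + (c - (c + \<rho> * v))\<^sup>2 = \<rho>\<^sup>2 * (1 + v\<^sup>2)" by (simp add: power2_eq_square algebra_simps)
      then show ?thesis using \<rho> by (simp add: real_sqrt_mult)
    qed
    then show "ennreal (sqrt (\<rho>\<^sup>2 + (c - (c + \<rho> * v))\<^sup>2) powr (-e)) = ennreal (\<rho> powr (-e)) * ennreal (sqrt (1 + v\<^sup>2) powr (-e))"
      using \<rho> by (simp add: powr_mult ennreal_mult[symmetric] del: ennreal_mult')
  qed
  also have "ennreal \<bar>\<rho>\<bar> * (\<integral>\<^sup>+v. ennreal (\<rho> powr (-e)) * ennreal (sqrt (1 + v\<^sup>2) powr (-e)) \<partial>lborel)
      = ennreal \<rho> * ennreal (\<rho> powr (-e)) * ennreal (kc e)"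
    using \<rho> kc_fin[OF e] by (simp add: nn_integral_cmult kc_def ennreal_enn2real_if mult.assoc)
  also have "\<dots> = ennreal (kc e * \<rho> powr (1 - e))"
  proof -
    have "\<rho> * \<rho> powr (-e) = \<rho> powr (1 - e)" using \<rho> by (simp add: powr_diff powr_minus_divide)
    then show ?thesis using \<rho> kc_pos[OF e] by (simp add: ennreal_mult[symmetric] mult_ac del: ennreal_mult')
  qed
  finally show ?thesis .
qed



lemma alg_id:
  fixes F \<kappa> \<phi> k \<eta> q r :: real
  assumes pos: "0 < F" "0 < \<kappa>" "0 < \<phi>" "0 < k" and \<eta>: "0 < \<eta>" and q: "0 < q"
    and rr: "r * (1 + 1/q - 1/\<eta>) = 1"
  shows "(F powr \<eta> * \<kappa> powr r * \<phi> powr (1 - \<eta>) * k powr (1 - r)) powr (1/q)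
       * (F powr \<eta> * \<phi> powr (1 - \<eta>) * k) powr (1/\<eta> - 1/q)
       * (\<kappa> powr r * \<phi> * k powr (1 - r)) powr (1 - 1/\<eta>) = F * \<kappa>"
proof -
  let ?L = "(F powr \<eta> * \<kappa> powr r * \<phi> powr (1 - \<eta>) * k powr (1 - r)) powr (1/q)
       * (F powr \<eta> * \<phi> powr (1 - \<eta>) * k) powr (1/\<eta> - 1/q)
       * (\<kappa> powr r * \<phi> * k powr (1 - r)) powr (1 - 1/\<eta>)"
  have Lp: "0 < ?L" using pos by simp
  have "ln ?L = (1/q) * (\<eta> * ln F + r * ln \<kappa> + (1 - \<eta>) * ln \<phi> + (1 - r) * ln k)
      + (1/\<eta> - 1/q) * (\<eta> * ln F + (1 - \<eta>) * ln \<phi> + ln k)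
      + (1 - 1/\<eta>) * (r * ln \<kappa> + ln \<phi> + (1 - r) * ln k)"
    using pos by (simp add: ln_mult ln_powr)
  also have "\<dots> = ln F + ln \<kappa>"
  proof -
    have c1: "(1/q) * \<eta> + (1/\<eta> - 1/q) * \<eta> = 1" using \<eta> by (simp add: field_simps)
    have c2: "(1/q) * r + (1 - 1/\<eta>) * r = 1" using rr by (simp add: algebra_simps)
    have c3: "(1/q) * (1 - \<eta>) + (1/\<eta> - 1/q) * (1 - \<eta>) + (1 - 1/\<eta>) = 0" using \<eta> by (simp add: field_simps)
    have c4: "(1/q) * (1 - r) + (1/\<eta> - 1/q) + (1 - 1/\<eta>) * (1 - r) = 0"
    proof -
      have h: "r * (1/\<eta>) - r * (1/q) = r - 1" using rr by (simp add: algebra_simps)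
      have gen: "\<And>a b. a * (1 - r) + (b - a) + (1 - b) * (1 - r) = 1 - r + (r * b - r * a)"
        by algebra
      have "(1/q) * (1 - r) + (1/\<eta> - 1/q) + (1 - 1/\<eta>) * (1 - r) = 1 - r + (r * (1/\<eta>) - r * (1/q))"
        by (rule gen)
      then show ?thesis using h by simp
    qed
    have gen: "\<And>a b. a * (\<eta> * ln F + r * ln \<kappa> + (1 - \<eta>) * ln \<phi> + (1 - r) * ln k)
      + (b - a) * (\<eta> * ln F + (1 - \<eta>) * ln \<phi> + ln k)
      + (1 - b) * (r * ln \<kappa> + ln \<phi> + (1 - r) * ln k)
      = (a * \<eta> + (b - a) * \<eta>) * ln F + (a * r + (1 - b) * r) * ln \<kappa>
        + (a * (1 - \<eta>) + (b - a) * (1 - \<eta>) + (1 - b)) * ln \<phi>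
        + (a * (1 - r) + (b - a) + (1 - b) * (1 - r)) * ln k"
      by algebra
    have "(1/q) * (\<eta> * ln F + r * ln \<kappa> + (1 - \<eta>) * ln \<phi> + (1 - r) * ln k)
      + (1/\<eta> - 1/q) * (\<eta> * ln F + (1 - \<eta>) * ln \<phi> + ln k)
      + (1 - 1/\<eta>) * (r * ln \<kappa> + ln \<phi> + (1 - r) * ln k)
      = ((1/q) * \<eta> + (1/\<eta> - 1/q) * \<eta>) * ln F + ((1/q) * r + (1 - 1/\<eta>) * r) * ln \<kappa>
        + ((1/q) * (1 - \<eta>) + (1/\<eta> - 1/q) * (1 - \<eta>) + (1 - 1/\<eta>)) * ln \<phi>
        + ((1/q) * (1 - r) + (1/\<eta> - 1/q) + (1 - 1/\<eta>) * (1 - r)) * ln k"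
      by (rule gen)
    also have "\<dots> = ln F + ln \<kappa>" unfolding c1 c2 c3 c4 by simp
    finally show ?thesis .
  qed
  also have "\<dots> = ln (F * \<kappa>)" using pos by (simp add: ln_mult)
  finally have "ln ?L = ln (F * \<kappa>)" .
  then show ?thesis using Lp pos by simp
qed

definition kk :: "real \<Rightarrow> real \<Rightarrow> 'a::euclidean_space \<Rightarrow> real" where
  "kk e r a = (kc e * norm a powr (1 - e)) powr (1/r)"

lemma kk_nn: "0 \<le> kk e r a" by (simp add: kk_def)

lemma kk_pos: "1 < e \<Longrightarrow> a \<noteq> 0 \<Longrightarrow> 0 < kk e r a"
  using kc_pos[of e] by (simp add: kk_def)

lemma kk_0: "kk e r 0 = 0" by (simp add: kk_def)

lemma kk_meas[measurable]: "kk e r \<in> borel_measurable borel"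
  unfolding kk_def[abs_def] by measurable

lemma int_split:
  fixes f :: "'a::euclidean_space \<times> 'b::euclidean_space \<Rightarrow> ennreal"
  assumes [measurable]: "f \<in> borel_measurable lborel"
  shows "(\<integral>\<^sup>+z. f z \<partial>lborel) = (\<integral>\<^sup>+x. \<integral>\<^sup>+s. f (x, s) \<partial>lborel \<partial>lborel)"
proof -
  have m: "f \<in> borel_measurable (lborel \<Otimes>\<^sub>M lborel)" by (simp add: lborel_prod)
  have "(\<integral>\<^sup>+x. \<integral>\<^sup>+s. f (x, s) \<partial>lborel \<partial>lborel) = integral\<^sup>N (lborel \<Otimes>\<^sub>M lborel) f"
    by (rule lborel.nn_integral_fst[OF m])
  then show ?thesis by (simp add: lborel_prod)
qed

lemma AE_fst_ne:
  fixes c :: "'a::euclidean_space"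
  shows "AE z in (lborel :: ('a \<times> real) measure). fst z \<noteq> c"
proof -
  have "AE z in (lborel \<Otimes>\<^sub>M lborel :: ('a \<times> real) measure). fst z \<noteq> c"
  proof (rule lborel_pair.AE_pair_measure)
    show "{x \<in> space (lborel \<Otimes>\<^sub>M lborel). fst x \<noteq> c} \<in> sets (lborel \<Otimes>\<^sub>M (lborel :: real measure))"
      by measurable
    show "AE x in lborel. AE y in lborel. fst (x, y::real) \<noteq> c"
      using AE_lborel_singleton[of c] by eventually_elim auto
  qed
  then show ?thesis by (metis lborel_prod)
qed

lemma dist_pair_eq:
  fixes x z :: "'a::euclidean_space" and t s :: real
  shows "dist (x, t) (z, s) = sqrt ((norm (x - z))\<^sup>2 + (t - s)\<^sup>2)"
  by (simp only: dist_Pair_Pair) (simp add: dist_norm dist_real_def power2_abs)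

lemma kern_s:
  fixes x z :: "'a::euclidean_space" and t s :: real
  assumes xz: "x \<noteq> z" and r: "0 < r" and mm: "0 < mm" and e: "1 < mm * r"
  shows "(\<integral>\<^sup>+s. ennreal ((dist (x, t) (z, s) powr (-mm)) powr r) \<partial>lborel) = ennreal (kk (mm*r) r (x - z) powr r)"
proof -
  have \<rho>: "0 < norm (x - z)" using xz by simp
  have "(\<integral>\<^sup>+s. ennreal ((dist (x, t) (z, s) powr (-mm)) powr r) \<partial>lborel)
      = (\<integral>\<^sup>+s. ennreal (sqrt ((norm (x - z))\<^sup>2 + (t - s)\<^sup>2) powr (-(mm*r))) \<partial>lborel)"
    by (simp add: dist_pair_eq powr_powr)
  also have "\<dots> = ennreal (kc (mm*r) * norm (x - z) powr (1 - mm*r))"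
    by (rule K1[OF e \<rho>])
  also have "kc (mm*r) * norm (x - z) powr (1 - mm*r) = kk (mm*r) r (x - z) powr r"
    using r kc_pos[OF e] by (simp add: kk_def powr_powr)
  finally show ?thesis .
qed

lemma kern_t:
  fixes x z :: "'a::euclidean_space" and t s :: real
  assumes xz: "x \<noteq> z" and r: "0 < r" and mm: "0 < mm" and e: "1 < mm * r"
  shows "(\<integral>\<^sup>+t. ennreal ((dist (x, t) (z, s) powr (-mm)) powr r) \<partial>lborel) = ennreal (kk (mm*r) r (x - z) powr r)"
proof -
  have \<rho>: "0 < norm (x - z)" using xz by simp
  have "(\<integral>\<^sup>+t. ennreal ((dist (x, t) (z, s) powr (-mm)) powr r) \<partial>lborel)
      = (\<integral>\<^sup>+t. ennreal (sqrt ((norm (x - z))\<^sup>2 + (s - t)\<^sup>2) powr (-(mm*r))) \<partial>lborel)"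
    by (simp add: dist_pair_eq powr_powr power2_commute)
  also have "\<dots> = ennreal (kc (mm*r) * norm (x - z) powr (1 - mm*r))"
    by (rule K1[OF e \<rho>])
  also have "kc (mm*r) * norm (x - z) powr (1 - mm*r) = kk (mm*r) r (x - z) powr r"
    using r kc_pos[OF e] by (simp add: kk_def powr_powr)
  finally show ?thesis .
qed

lemma MAIN_B:
  fixes F1 :: "'a::euclidean_space \<times> real \<Rightarrow> real" and \<phi> :: "'a \<Rightarrow> real" and x' :: 'a
  assumes [measurable]: "F1 \<in> borel_measurable lborel" "\<phi> \<in> borel_measurable lborel"
    and F1nn: "\<And>z. 0 \<le> F1 z" and \<phi>nn: "\<And>x. 0 \<le> \<phi> x"
    and h\<phi>: "\<And>z'. (\<integral>\<^sup>+s. ennreal (F1 (z', s) powr \<eta>) \<partial>lborel) = ennreal (\<phi> z' powr \<eta>)"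
    and hpos: "\<And>z' s. 0 < F1 (z', s) \<Longrightarrow> 0 < \<phi> z'"
    and \<eta>: "1 \<le> \<eta>" "\<eta> \<le> q" and r: "0 < r" "r * (1 + 1/q - 1/\<eta>) = 1" and mm: "0 < mm" and e: "1 < mm * r"
  shows "(\<integral>\<^sup>+t. epow (\<integral>\<^sup>+z. ennreal (F1 z * dist (x', t) z powr (-mm)) \<partial>lborel) q \<partial>lborel)
     \<le> epow (\<integral>\<^sup>+z'. ennreal (\<phi> z' * kk (mm*r) r (x' - z')) \<partial>lborel) q"
proof -
  define k where "k z' = kk (mm*r) r (x' - z')" for z'
  define I where "I = (\<integral>\<^sup>+z'. ennreal (\<phi> z' * k z') \<partial>lborel)"
  define \<kappa> where "\<kappa> t z = sqrt ((norm (x' - fst z))\<^sup>2 + (t - snd z)\<^sup>2) powr (-mm)" for t :: real and z :: "'a \<times> real"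
  have \<kappa>_eq: "\<kappa> t z = dist (x', t) z powr (-mm)" for t z
    by (cases z) (simp add: \<kappa>_def dist_pair_eq)
  define X where "X t z = F1 z powr \<eta> * \<kappa> t z powr r * \<phi> (fst z) powr (1 - \<eta>) * k (fst z) powr (1 - r)" for t z
  define Y where "Y z = F1 z powr \<eta> * \<phi> (fst z) powr (1 - \<eta>) * k (fst z)" for z
  define Z where "Z t z = \<kappa> t z powr r * \<phi> (fst z) * k (fst z) powr (1 - r)" for t z
  have q: "1 \<le> q" using \<eta> by simp
  have km[measurable]: "k \<in> borel_measurable borel" unfolding k_def[abs_def] by measurable
  have F1p[measurable]: "F1 \<in> borel_measurable (lborel \<Otimes>\<^sub>M lborel)"
    by (simp add: lborel_prod)
  have Xp: "(\<lambda>(t, z). X t z) \<in> borel_measurable (lborel \<Otimes>\<^sub>M (lborel \<Otimes>\<^sub>M lborel))"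
    unfolding X_def \<kappa>_def by measurable
  have Xm[measurable]: "(\<lambda>(t, z). X t z) \<in> borel_measurable (lborel \<Otimes>\<^sub>M lborel)"
    using Xp by (simp add: lborel_prod)
  have Xm1p: "X t \<in> borel_measurable (lborel \<Otimes>\<^sub>M lborel)" for t
    unfolding X_def \<kappa>_def by measurable
  have Xm1[measurable]: "X t \<in> borel_measurable lborel" for t
    using Xm1p[of t] by (simp add: lborel_prod)
  have Yp: "Y \<in> borel_measurable (lborel \<Otimes>\<^sub>M lborel)" unfolding Y_def by measurable
  have Ym[measurable]: "Y \<in> borel_measurable lborel" using Yp by (simp add: lborel_prod)
  have Zp: "Z t \<in> borel_measurable (lborel \<Otimes>\<^sub>M lborel)" for t unfolding Z_def \<kappa>_def by measurable
  have Zm[measurable]: "Z t \<in> borel_measurable lborel" for t using Zp[of t] by (simp add: lborel_prod)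
  have Gp: "(\<lambda>z. F1 z * \<kappa> t z) \<in> borel_measurable (lborel \<Otimes>\<^sub>M lborel)" for t unfolding \<kappa>_def by measurable
  have Gm[measurable]: "(\<lambda>z. F1 z * \<kappa> t z) \<in> borel_measurable lborel" for t using Gp[of t] by (simp add: lborel_prod)
  have knn: "\<And>z'. 0 \<le> k z'" by (simp add: k_def kk_nn)
  have kpos: "\<And>z'. z' \<noteq> x' \<Longrightarrow> 0 < k z'" using e by (auto simp: k_def intro!: kk_pos)
  have k0: "k x' = 0" by (simp add: k_def kk_0)
  have ks: "(\<integral>\<^sup>+s. ennreal (\<kappa> t (z', s) powr r) \<partial>lborel) = ennreal (k z' powr r)" if "z' \<noteq> x'" for z' t
    unfolding \<kappa>_eq k_def using kern_s[of x' z' r mm t] that r mm e by auto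
  have kt: "(\<integral>\<^sup>+t. ennreal (\<kappa> t (z', s) powr r) \<partial>lborel) = ennreal (k z' powr r)" if "z' \<noteq> x'" for z' s
    unfolding \<kappa>_eq k_def using kern_t[of x' z' r mm s] that r mm e by auto
  have kk1: "k z' powr (1 - r) * k z' powr r = k z'" for z'
  proof (cases "k z' = 0")
    case False then show ?thesis using knn[of z'] by (simp add: powr_add[symmetric])
  qed simp
  have \<phi>\<phi>: "\<phi> z' powr (1 - \<eta>) * \<phi> z' powr \<eta> = \<phi> z'" for z'
  proof (cases "\<phi> z' = 0")
    case False then show ?thesis using \<phi>nn[of z'] by (simp add: powr_add[symmetric])
  qed simp
  have mul: "\<And>a b. 0 \<le> a \<Longrightarrow> 0 \<le> b \<Longrightarrow> ennreal (a * b) = ennreal a * ennreal b"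
    by (simp add: ennreal_mult)
  have intY: "(\<integral>\<^sup>+z. ennreal (Y z) \<partial>lborel) = I"
  proof -
    have "(\<integral>\<^sup>+z. ennreal (Y z) \<partial>lborel) = (\<integral>\<^sup>+z'. \<integral>\<^sup>+s. ennreal (F1 (z', s) powr \<eta>) * ennreal (\<phi> z' powr (1 - \<eta>) * k z') \<partial>lborel \<partial>lborel)"
    proof -
      have "(\<integral>\<^sup>+z. ennreal (Y z) \<partial>lborel) = (\<integral>\<^sup>+z'. \<integral>\<^sup>+s. ennreal (Y (z', s)) \<partial>lborel \<partial>lborel)"
        by (rule int_split) measurable
      then show ?thesis by (simp add: Y_def mul knn \<phi>nn mult.assoc)
    qed
    also have "\<dots> = (\<integral>\<^sup>+z'. ennreal (\<phi> z' powr \<eta>) * ennreal (\<phi> z' powr (1 - \<eta>) * k z') \<partial>lborel)"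
      by (simp add: nn_integral_multc h\<phi>)
    also have "\<dots> = I" unfolding I_def
    proof (intro nn_integral_cong)
      fix z'
      have ee: "\<phi> z' powr \<eta> * (\<phi> z' powr (1 - \<eta>) * k z') = \<phi> z' * k z'"
        using \<phi>\<phi>[of z'] by (simp add: mult_ac)
      show "ennreal (\<phi> z' powr \<eta>) * ennreal (\<phi> z' powr (1 - \<eta>) * k z') = ennreal (\<phi> z' * k z')"
        by (subst mul[symmetric]) (simp_all add: knn ee)
    qed
    finally show ?thesis .
  qed
  have intZ: "(\<integral>\<^sup>+z. ennreal (Z t z) \<partial>lborel) \<le> I" for t
  proof -
    have "(\<integral>\<^sup>+z. ennreal (Z t z) \<partial>lborel) = (\<integral>\<^sup>+z'. \<integral>\<^sup>+s. ennreal (\<kappa> t (z', s) powr r) * ennreal (\<phi> z' * k z' powr (1 - r)) \<partial>lborel \<partial>lborel)"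
    proof -
      have "(\<integral>\<^sup>+z. ennreal (Z t z) \<partial>lborel) = (\<integral>\<^sup>+z'. \<integral>\<^sup>+s. ennreal (Z t (z', s)) \<partial>lborel \<partial>lborel)"
        by (rule int_split) measurable
      then show ?thesis by (simp add: Z_def mul knn \<phi>nn mult.assoc)
    qed
    also have "\<dots> = (\<integral>\<^sup>+z'. (\<integral>\<^sup>+s. ennreal (\<kappa> t (z', s) powr r) \<partial>lborel) * ennreal (\<phi> z' * k z' powr (1 - r)) \<partial>lborel)"
      by (intro nn_integral_cong nn_integral_multc) (unfold \<kappa>_def, measurable)
    also have "\<dots> \<le> I" unfolding I_def
    proof (intro nn_integral_mono)
      fix z'
      show "(\<integral>\<^sup>+s. ennreal (\<kappa> t (z', s) powr r) \<partial>lborel) * ennreal (\<phi> z' * k z' powr (1 - r)) \<le> ennreal (\<phi> z' * k z')"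
      proof (cases "z' = x'")
        case True then show ?thesis by (simp add: k0)
      next
        case False
        have ee: "k z' powr r * (\<phi> z' * k z' powr (1 - r)) = \<phi> z' * k z'"
          using kk1[of z'] by (simp add: mult_ac)
        show ?thesis unfolding ks[OF False] by (subst mul[symmetric], simp_all add: \<phi>nn ee)
      qed
    qed
    finally show ?thesis .
  qed
  have intX: "(\<integral>\<^sup>+t. \<integral>\<^sup>+z. ennreal (X t z) \<partial>lborel \<partial>lborel) \<le> I"
  proof -
    have "(\<integral>\<^sup>+t. \<integral>\<^sup>+z. ennreal (X t z) \<partial>lborel \<partial>lborel) = (\<integral>\<^sup>+z. \<integral>\<^sup>+t. ennreal (X t z) \<partial>lborel \<partial>lborel)"
      by (rule swap_int) measurable
    also have "\<dots> = (\<integral>\<^sup>+z. (\<integral>\<^sup>+t. ennreal (\<kappa> t z powr r) \<partial>lborel) * ennreal (F1 z powr \<eta> * \<phi> (fst z) powr (1 - \<eta>) * k (fst z) powr (1 - r)) \<partial>lborel)"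
    proof (intro nn_integral_cong)
      fix z :: "'a \<times> real"
      have "(\<integral>\<^sup>+t. ennreal (X t z) \<partial>lborel) = (\<integral>\<^sup>+t. ennreal (\<kappa> t z powr r) * ennreal (F1 z powr \<eta> * \<phi> (fst z) powr (1 - \<eta>) * k (fst z) powr (1 - r)) \<partial>lborel)"
        by (intro nn_integral_cong, subst mul[symmetric]) (auto simp: X_def mult_ac knn \<phi>nn)
      also have "\<dots> = (\<integral>\<^sup>+t. ennreal (\<kappa> t z powr r) \<partial>lborel) * ennreal (F1 z powr \<eta> * \<phi> (fst z) powr (1 - \<eta>) * k (fst z) powr (1 - r))"
        by (rule nn_integral_multc) (unfold \<kappa>_def, measurable)
      finally show "(\<integral>\<^sup>+t. ennreal (X t z) \<partial>lborel) = (\<integral>\<^sup>+t. ennreal (\<kappa> t z powr r) \<partial>lborel) * ennreal (F1 z powr \<eta> * \<phi> (fst z) powr (1 - \<eta>) * k (fst z) powr (1 - r))" .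
    qed
    also have "\<dots> \<le> (\<integral>\<^sup>+z. ennreal (Y z) \<partial>lborel)"
    proof (intro nn_integral_mono)
      fix z :: "'a \<times> real"
      obtain z' s where zz: "z = (z', s)" by (cases z)
      show "(\<integral>\<^sup>+t. ennreal (\<kappa> t z powr r) \<partial>lborel) * ennreal (F1 z powr \<eta> * \<phi> (fst z) powr (1 - \<eta>) * k (fst z) powr (1 - r)) \<le> ennreal (Y z)"
      proof (cases "z' = x'")
        case True then show ?thesis by (simp add: zz k0)
      next
        case False
        have ee: "k z' powr r * (F1 z powr \<eta> * \<phi> z' powr (1 - \<eta>) * k z' powr (1 - r)) = Y z"
          using kk1[of z'] by (simp add: Y_def zz mult_ac)
        show ?thesis unfolding zz fst_conv kt[OF False]
          by (subst mul[symmetric], simp_all add: \<phi>nn ee[unfolded zz])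
      qed
    qed
    finally show ?thesis using intY by simp
  qed
  have point: "epow (\<integral>\<^sup>+z. ennreal (F1 z * \<kappa> t z) \<partial>lborel) q \<le> (\<integral>\<^sup>+z. ennreal (X t z) \<partial>lborel) * epow I (q - 1)" for t
  proof -
    have "(\<integral>\<^sup>+z. ennreal (F1 z * \<kappa> t z) \<partial>lborel)
        = (\<integral>\<^sup>+z. ennreal (X t z powr (1/q) * Y z powr (1/\<eta> - 1/q) * Z t z powr (1 - 1/\<eta>)) \<partial>lborel)"
    proof (intro nn_integral_cong_AE)
      show "AE z in lborel. ennreal (F1 z * \<kappa> t z) = ennreal (X t z powr (1/q) * Y z powr (1/\<eta> - 1/q) * Z t z powr (1 - 1/\<eta>))"
        using AE_fst_ne[of x']
      proof eventually_elim
        fix z :: "'a \<times> real"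
        assume ne: "fst z \<noteq> x'"
        obtain z' s where zz: "z = (z', s)" by (cases z)
        show "ennreal (F1 z * \<kappa> t z) = ennreal (X t z powr (1/q) * Y z powr (1/\<eta> - 1/q) * Z t z powr (1 - 1/\<eta>))"
        proof (cases "F1 z = 0")
          case True then show ?thesis using \<eta> by (simp add: X_def)
        next
          case False
          then have F: "0 < F1 z" using F1nn[of z] by simp
          have p: "0 < \<phi> z'" using hpos[of z' s] F zz by simp
          have kp: "0 < k z'" using kpos ne zz by simp
          have "(x', t) \<noteq> z" using ne by auto
          then have dp: "0 < dist (x', t) z" by simp
          have kap: "0 < \<kappa> t z" using dp by (simp add: \<kappa>_eq)
          have "X t z powr (1/q) * Y z powr (1/\<eta> - 1/q) * Z t z powr (1 - 1/\<eta>) = F1 z * \<kappa> t z"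
            unfolding X_def Y_def Z_def zz fst_conv
            using alg_id[of "F1 (z', s)" "\<kappa> t (z', s)" "\<phi> z'" "k z'" \<eta> q r] F kap p kp \<eta> r zz by simp
          then show ?thesis by simp
        qed
      qed
    qed
    also have "\<dots> \<le> epow (\<integral>\<^sup>+z. ennreal (X t z) \<partial>lborel) (1/q) * epow (\<integral>\<^sup>+z. ennreal (Y z) \<partial>lborel) (1/\<eta> - 1/q)
        * epow (\<integral>\<^sup>+z. ennreal (Z t z) \<partial>lborel) (1 - 1/\<eta>)"
    proof (rule holder3)
      show "\<And>x. 0 \<le> X t x" "\<And>x. 0 \<le> Y x" "\<And>x. 0 \<le> Z t x"
        by (auto simp: X_def Y_def Z_def knn \<phi>nn)
      show "0 \<le> 1/q" "0 \<le> 1/\<eta> - 1/q" "0 \<le> 1 - 1/\<eta>" "1/q + (1/\<eta> - 1/q) + (1 - 1/\<eta>) = 1"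
        using \<eta> by (auto simp: frac_le)
    qed measurable
    also have "\<dots> \<le> epow (\<integral>\<^sup>+z. ennreal (X t z) \<partial>lborel) (1/q) * epow I (1/\<eta> - 1/q) * epow I (1 - 1/\<eta>)"
      using \<eta> intY intZ[of t]
      by (intro mult_mono epow_mono) (auto simp: frac_le)
    also have "\<dots> = epow (\<integral>\<^sup>+z. ennreal (X t z) \<partial>lborel) (1/q) * epow I (1 - 1/q)"
      by (simp add: mult.assoc epow_add)
    finally have G: "(\<integral>\<^sup>+z. ennreal (F1 z * \<kappa> t z) \<partial>lborel) \<le> epow (\<integral>\<^sup>+z. ennreal (X t z) \<partial>lborel) (1/q) * epow I (1 - 1/q)" .
    have "epow (\<integral>\<^sup>+z. ennreal (F1 z * \<kappa> t z) \<partial>lborel) q \<le> epow (epow (\<integral>\<^sup>+z. ennreal (X t z) \<partial>lborel) (1/q) * epow I (1 - 1/q)) q"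
      using q by (intro epow_mono G) auto
    also have "\<dots> = (\<integral>\<^sup>+z. ennreal (X t z) \<partial>lborel) * epow I (q - 1)"
      using q by (simp add: epow_mult epow_epow algebra_simps)
    finally show ?thesis .
  qed
  have "(\<integral>\<^sup>+t. epow (\<integral>\<^sup>+z. ennreal (F1 z * dist (x', t) z powr (-mm)) \<partial>lborel) q \<partial>lborel)
      \<le> (\<integral>\<^sup>+t. (\<integral>\<^sup>+z. ennreal (X t z) \<partial>lborel) * epow I (q - 1) \<partial>lborel)"
    using point by (intro nn_integral_mono) (simp add: \<kappa>_eq)
  also have "\<dots> = (\<integral>\<^sup>+t. \<integral>\<^sup>+z. ennreal (X t z) \<partial>lborel \<partial>lborel) * epow I (q - 1)"
    by (rule nn_integral_multc) measurable
  also have "\<dots> \<le> I * epow I (q - 1)"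
    by (intro mult_right_mono intX) auto
  also have "\<dots> = epow I q"
    using epow_add[of I 1 "q - 1"] by simp
  finally show ?thesis unfolding I_def k_def .
qed



lemma DIM_vec: "DIM(real^'m::finite) = CARD('m)" by simp

lemma dist_prod_eq:
  fixes y z :: "'a::euclidean_space \<times> real"
  shows "dist y z = sqrt ((norm (fst y - fst z))\<^sup>2 + (snd y - snd z)\<^sup>2)"
  by (cases y, cases z) (simp add: dist_pair_eq)

lemma upper_half_ind: "indicator (upper_half TYPE('m::finite)) z = (indicator {0<..} (snd z) :: real)"
  by (simp add: upper_half_def indicator_def)

lemma norm_integrand:
  fixes F :: "(real^'m::finite) \<times> real \<Rightarrow> real" and y z :: "(real^'m) \<times> real"
  shows "norm (indicator (upper_half TYPE('m)) z *\<^sub>R (F z / dist y z powr (real (CARD('m) + 1) - \<beta>)))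
     = indicator {0<..} (snd z) * \<bar>F z\<bar> * dist y z powr (-(real (CARD('m) + 1) - \<beta>))"
proof -
  have i: "inverse (dist y z powr (real (CARD('m) + 1) - \<beta>)) = dist y z powr (-(real (CARD('m) + 1) - \<beta>))"
    by (rule powr_minus[symmetric])
  have "norm (indicator (upper_half TYPE('m)) z *\<^sub>R (F z / dist y z powr (real (CARD('m) + 1) - \<beta>)))
      = indicator {0<..} (snd z) * (\<bar>F z\<bar> * inverse (dist y z powr (real (CARD('m) + 1) - \<beta>)))"
    by (simp only: norm_scaleR upper_half_ind real_norm_def divide_inverse abs_mult abs_inverse)
       (simp add: indicator_def abs_mult)
  then show ?thesis unfolding i by (simp add: mult.assoc)
qed

lemma Gop_le:
  fixes F :: "(real^'m::finite) \<times> real \<Rightarrow> real" and y :: "(real^'m) \<times> real"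
  shows "ennreal \<bar>G_op \<beta> F y\<bar> \<le> (\<integral>\<^sup>+z. ennreal (indicator {0<..} (snd z) * \<bar>F z\<bar> * dist y z powr (-(real (CARD('m) + 1) - \<beta>))) \<partial>lborel)"
proof -
  let ?f = "\<lambda>z. indicator (upper_half TYPE('m)) z *\<^sub>R (F z / dist y z powr (real (CARD('m) + 1) - \<beta>))"
  have nf: "ennreal (norm (?f z)) = ennreal (indicator {0<..} (snd z) * \<bar>F z\<bar> * dist y z powr (-(real (CARD('m) + 1) - \<beta>)))" for z
  proof -
    have i: "inverse (dist y z powr (real (CARD('m) + 1) - \<beta>)) = dist y z powr (-(real (CARD('m) + 1) - \<beta>))"
      by (rule powr_minus[symmetric])
    have "norm (?f z) = indicator {0<..} (snd z) * (\<bar>F z\<bar> * inverse (dist y z powr (real (CARD('m) + 1) - \<beta>)))"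
      by (simp only: norm_scaleR upper_half_ind real_norm_def divide_inverse abs_mult abs_inverse)
         (simp add: indicator_def abs_mult)
    then show ?thesis unfolding i by (simp add: mult.assoc)
  qed
  have "ennreal \<bar>G_op \<beta> F y\<bar> = ennreal (norm (integral\<^sup>L lborel ?f))"
    by (simp add: G_op_def set_lebesgue_integral_def)
  also have "\<dots> \<le> (\<integral>\<^sup>+z. ennreal (norm (?f z)) \<partial>lborel)"
  proof (cases "integrable lborel ?f")
    case True then show ?thesis by (rule integral_norm_bound_ennreal)
  next
    case False then show ?thesis by (simp add: not_integrable_integral_eq)
  qed
  also have "\<dots> = (\<integral>\<^sup>+z. ennreal (indicator {0<..} (snd z) * \<bar>F z\<bar> * dist y z powr (-(real (CARD('m) + 1) - \<beta>))) \<partial>lborel)"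
    using nf by simp
  finally show ?thesis .
qed

theorem lemma2p7:
  fixes \<beta> \<tau> \<eta> q p :: real
  assumes "0 < \<beta>" "\<beta> < real (CARD('m::finite) + 1)"
    and "1 < \<tau>"
    and "1 \<le> \<eta>" "\<eta> \<le> q" "q \<le> p"
    and "1 / \<eta> < \<beta> + 1 / q"
    and "real CARD('m) / p = real CARD('m) / \<tau> + 1 / \<eta> - 1 / q - \<beta>"
  shows "\<exists>C::real. \<forall>F :: (real^'m) \<times> real \<Rightarrow> real.
           F \<in> borel_measurable lborel \<and> mixnorm \<tau> \<eta> F < \<infinity> \<longrightarrow>
             (AE y in lborel. y \<in> upper_half TYPE('m) \<longrightarrow>
                set_integrable lborel (upper_half TYPE('m))
                  (\<lambda>z. F z / dist y z powr (real (CARD('m) + 1) - \<beta>)))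
           \<and> mixnorm p q (G_op \<beta> F) \<le> ennreal C * mixnorm \<tau> \<eta> F"
proof -
  note \<beta>0 = assms(1) and \<beta>n = assms(2) and \<tau>1 = assms(3) and \<eta>1 = assms(4) and \<eta>q = assms(5)
    and qp = assms(6) and gam0' = assms(7) and expo = assms(8)
  define d where "d = real CARD('m)"
  have d1: "1 \<le> d" by (simp add: d_def)
  define mm where "mm = real (CARD('m) + 1) - \<beta>"
  define \<gamma> where "\<gamma> = \<beta> + 1/q - 1/\<eta>"
  define den where "den = 1 + 1/q - 1/\<eta>"
  define r where "r = 1 / den"
  define lam where "lam = d - \<gamma>"
  define e where "e = mm * r"
  have q1: "1 \<le> q" and p1: "1 \<le> q" using \<eta>1 \<eta>q by auto
  have \<eta>0: "0 < \<eta>" using \<eta>1 by simp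
  have iq: "1/q \<le> 1/\<eta>" using \<eta>0 \<eta>q by (simp add: frac_le)
  have i\<eta>: "1/\<eta> \<le> 1" using \<eta>1 by simp
  have "0 < 1/q" using q1 by simp
  then have den0: "0 < den" unfolding den_def using i\<eta> by linarith
  have r0: "0 < r" using den0 by (simp add: r_def)
  have rr: "r * (1 + 1/q - 1/\<eta>) = 1" using den0 by (simp add: r_def den_def)
  have \<gamma>0: "0 < \<gamma>" using gam0' by (simp add: \<gamma>_def)
  have \<gamma>d: "\<gamma> = d/\<tau> - d/p" using expo by (simp add: \<gamma>_def d_def)
  have p0: "0 < p" using q1 qp by simp
  have \<tau>p: "\<tau> < p"
  proof (rule ccontr)
    assume "\<not> \<tau> < p"
    then have "d/\<tau> \<le> d/p" using p0 d1 by (intro divide_left_mono) auto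
    then show False using \<gamma>0 \<gamma>d by simp
  qed
  have \<gamma>lt: "\<gamma> < d"
  proof -
    have "d/\<tau> < d" using \<tau>1 d1 by (simp add: divide_less_eq)
    moreover have "0 < d/p" using d1 p0 by simp
    ultimately show ?thesis using \<gamma>d by simp
  qed
  have lam0: "0 < lam" and lamd: "lam < d" using \<gamma>0 \<gamma>lt by (auto simp: lam_def)
  have mm0: "0 < mm" using \<beta>n by (simp add: mm_def)
  have e1: "1 < e"
  proof -
    have "den < mm" using \<gamma>lt by (simp add: den_def mm_def \<gamma>_def d_def)
    then show ?thesis using den0 by (simp add: e_def r_def)
  qed
  have rel: "1/\<tau> - 1/p = 1 - lam / d"
    using \<gamma>d d1 by (simp add: lam_def field_simps)
  have kk_eq: "kk e r a = kc e powr (1/r) * norm a powr (-lam)" for a :: "real^'m"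
  proof -
    have ir: "1/r = den" using den0 by (simp add: r_def)
    have rd: "r * den = 1" using den0 by (simp add: r_def)
    have "(1 - e) * (1/r) = den - mm * (r * den)" unfolding ir e_def by (simp add: algebra_simps)
    also have "\<dots> = den - mm" using rd by simp
    also have "\<dots> = -lam" by (simp add: den_def mm_def lam_def \<gamma>_def d_def)
    finally have ex: "(1 - e) * (1/r) = -lam" .
    have "kk e r a = kc e powr (1/r) * (norm a powr (1 - e)) powr (1/r)"
      using kc_pos[OF e1] by (simp add: kk_def powr_mult)
    also have "(norm a powr (1 - e)) powr (1/r) = norm a powr (-lam)"
      by (simp only: powr_powr ex)
    finally show ?thesis .
  qed
  obtain CH where CH: "CH > 0" and HCH: "\<And>f :: real^'m \<Rightarrow> real. f \<in> borel_measurable lborel \<and> (\<forall>x. 0 \<le> f x) \<Longrightarrow>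
     (\<integral>\<^sup>+x. epow (\<integral>\<^sup>+y. ennreal (f y * norm (x - y) powr (-lam)) \<partial>lborel) p \<partial>lborel)
       \<le> ennreal CH * epow (\<integral>\<^sup>+x. ennreal (f x powr \<tau>) \<partial>lborel) (p/\<tau>)"
    using HLS[of \<tau> p lam, where 'a="real^'m"] \<tau>1 \<tau>p lam0 lamd rel by (auto simp: d_def)
  define c where "c = kc e powr (1/r)"
  have c0: "0 < c" using kc_pos[OF e1] by (simp add: c_def)
  show ?thesis
  proof (intro exI[of _ "c * CH powr (1/p)"] allI impI)
    fix F :: "(real^'m) \<times> real \<Rightarrow> real"
    assume HF: "F \<in> borel_measurable lborel \<and> mixnorm \<tau> \<eta> F < \<infinity>"
    then have Fm[measurable]: "F \<in> borel_measurable lborel" and mixfin: "mixnorm \<tau> \<eta> F < \<infinity>" by auto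
    have Fp[measurable]: "F \<in> borel_measurable (lborel \<Otimes>\<^sub>M lborel)" by (simp add: lborel_prod)
    define \<Phi> where "\<Phi> z' = (\<integral>\<^sup>+s. indicator {0<..} s * ennreal (\<bar>F (z', s)\<bar> powr \<eta>) \<partial>lborel)" for z'
    define M0 where "M0 = (\<integral>\<^sup>+z'. epow (\<Phi> z') (\<tau>/\<eta>) \<partial>lborel)"
    have mix: "mixnorm \<tau> \<eta> F = epow M0 (1/\<tau>)"
      by (simp add: mixnorm_def M0_def \<Phi>_def)
    have M0fin: "M0 < top"
    proof (rule ccontr)
      assume "\<not> M0 < top"
      then have "M0 = top" using top.not_eq_extremum by blast
      then show False using mixfin mix by simp
    qed
    have \<Phi>m[measurable]: "\<Phi> \<in> borel_measurable lborel"
      unfolding \<Phi>_def[abs_def] by measurable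
    have AEfin: "AE z' in lborel. \<Phi> z' \<noteq> top"
    proof -
      have "AE z' in lborel. epow (\<Phi> z') (\<tau>/\<eta>) \<noteq> \<infinity>"
        by (rule nn_integral_PInf_AE) (use M0fin in \<open>auto simp: M0_def\<close>)
      then show ?thesis by (auto simp: epow_eq_top_iff)
    qed
    define good where "good z' = (0 < \<Phi> z' \<and> \<Phi> z' < top)" for z'
    define F1 where "F1 z = (if good (fst z) \<and> 0 < snd z then \<bar>F z\<bar> else 0)" for z :: "(real^'m) \<times> real"
    define \<phi> where "\<phi> z' = (if good z' then enn2real (\<Phi> z') powr (1/\<eta>) else 0)" for z'
    have goodm[measurable]: "Measurable.pred lborel good" unfolding good_def[abs_def] by measurable
    have F1p: "F1 \<in> borel_measurable (lborel \<Otimes>\<^sub>M lborel)" unfolding F1_def[abs_def] by measurable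
    have F1m[measurable]: "F1 \<in> borel_measurable lborel" using F1p by (simp add: lborel_prod)
    have \<phi>m[measurable]: "\<phi> \<in> borel_measurable lborel" unfolding \<phi>_def[abs_def] by measurable
    have F1nn: "\<And>z. 0 \<le> F1 z" by (simp add: F1_def)
    have \<phi>nn: "\<And>z'. 0 \<le> \<phi> z'" by (simp add: \<phi>_def)
    have h\<phi>: "(\<integral>\<^sup>+s. ennreal (F1 (z', s) powr \<eta>) \<partial>lborel) = ennreal (\<phi> z' powr \<eta>)" for z'
    proof (cases "good z'")
      case True
      have "(\<integral>\<^sup>+s. ennreal (F1 (z', s) powr \<eta>) \<partial>lborel) = \<Phi> z'"
        unfolding \<Phi>_def using True by (intro nn_integral_cong) (simp add: F1_def indicator_def)
      also have "\<dots> = ennreal (enn2real (\<Phi> z'))" using True by (simp add: good_def less_top)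
      also have "enn2real (\<Phi> z') = \<phi> z' powr \<eta>" using True \<eta>0 by (simp add: \<phi>_def powr_powr)
      finally show ?thesis .
    next
      case False then show ?thesis by (simp add: F1_def \<phi>_def)
    qed
    have hpos: "0 < \<phi> z'" if "0 < F1 (z', s)" for z' s
    proof -
      have g: "good z'" using that by (auto simp: F1_def split: if_splits)
      then have "0 < enn2real (\<Phi> z')" by (simp add: good_def enn2real_positive_iff)
      then show ?thesis using g by (simp add: \<phi>_def)
    qed
    define G1 where "G1 x' t = (\<integral>\<^sup>+z. ennreal (F1 z * dist (x', t) z powr (-mm)) \<partial>lborel)" for x' t
    define P where "P x' = (\<integral>\<^sup>+z'. ennreal (\<phi> z' * norm (x' - z') powr (-lam)) \<partial>lborel)" for x' :: "real^'m"
    define I where "I x' = (\<integral>\<^sup>+z'. ennreal (\<phi> z' * kk e r (x' - z')) \<partial>lborel)" for x'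
    have MB: "(\<integral>\<^sup>+t. epow (G1 x' t) q \<partial>lborel) \<le> epow (I x') q" for x'
      unfolding G1_def I_def e_def
      by (rule MAIN_B[OF F1m \<phi>m F1nn \<phi>nn h\<phi> hpos \<eta>1 \<eta>q r0 rr mm0 e1[unfolded e_def]])
    have IP: "I x' = ennreal c * P x'" for x'
    proof -
      have "I x' = (\<integral>\<^sup>+z'. ennreal c * ennreal (\<phi> z' * norm (x' - z') powr (-lam)) \<partial>lborel)"
        unfolding I_def kk_eq c_def[symmetric]
      proof (intro nn_integral_cong)
        fix z' :: "real^'m"
        have "\<phi> z' * (c * norm (x' - z') powr (-lam)) = c * (\<phi> z' * norm (x' - z') powr (-lam))" by simp
        then show "ennreal (\<phi> z' * (c * norm (x' - z') powr (-lam))) = ennreal c * ennreal (\<phi> z' * norm (x' - z') powr (-lam))"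
          using c0 \<phi>nn[of z'] by (simp add: ennreal_mult mult_ac)
      qed
      also have "\<dots> = ennreal c * P x'" by (simp add: P_def nn_integral_cmult)
      finally show ?thesis .
    qed
    have \<phi>\<tau>: "(\<integral>\<^sup>+z'. ennreal (\<phi> z' powr \<tau>) \<partial>lborel) \<le> M0"
      unfolding M0_def
    proof (intro nn_integral_mono)
      fix z'
      show "ennreal (\<phi> z' powr \<tau>) \<le> epow (\<Phi> z') (\<tau>/\<eta>)"
      proof (cases "good z'")
        case True
        then have "\<Phi> z' = ennreal (enn2real (\<Phi> z'))" by (simp add: good_def less_top)
        then have "epow (\<Phi> z') (\<tau>/\<eta>) = ennreal (enn2real (\<Phi> z') powr (\<tau>/\<eta>))"
          by (metis epow_ennreal enn2real_nonneg)
        also have "enn2real (\<Phi> z') powr (\<tau>/\<eta>) = \<phi> z' powr \<tau>"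
          using True by (simp add: \<phi>_def powr_powr)
        finally show ?thesis by simp
      next
        case False then show ?thesis by (simp add: \<phi>_def)
      qed
    qed
    have BI: "(\<integral>\<^sup>+x'. epow (I x') p \<partial>lborel) \<le> ennreal (c powr p * CH) * epow M0 (p/\<tau>)"
    proof -
      have "(\<integral>\<^sup>+x'. epow (I x') p \<partial>lborel) = (\<integral>\<^sup>+x'. ennreal (c powr p) * epow (P x') p \<partial>lborel)"
        unfolding IP using c0 by (simp add: epow_mult epow_ennreal)
      also have "\<dots> = ennreal (c powr p) * (\<integral>\<^sup>+x'. epow (P x') p \<partial>lborel)"
        by (rule nn_integral_cmult) (unfold P_def, measurable)
      also have "\<dots> \<le> ennreal (c powr p) * (ennreal CH * epow (\<integral>\<^sup>+x. ennreal (\<phi> x powr \<tau>) \<partial>lborel) (p/\<tau>))"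
        unfolding P_def using HCH[of \<phi>] \<phi>nn by (intro mult_left_mono) auto
      also have "\<dots> \<le> ennreal (c powr p) * (ennreal CH * epow M0 (p/\<tau>))"
        using \<phi>\<tau> p0 \<tau>1 by (intro mult_left_mono epow_mono) auto
      also have "\<dots> = ennreal (c powr p * CH) * epow M0 (p/\<tau>)"
        using CH c0 by (simp add: ennreal_mult mult.assoc)
      finally show ?thesis .
    qed
    have R2: "AE z in lborel. indicator {0<..} (snd z) * \<bar>F z\<bar> = F1 z"
    proof -
      have "AE z in lborel \<Otimes>\<^sub>M lborel. indicator {0<..} (snd z) * \<bar>F z\<bar> = F1 z"
      proof (rule lborel_pair.AE_pair_measure)
        show "{x \<in> space (lborel \<Otimes>\<^sub>M lborel). indicator {0<..} (snd x) * \<bar>F x\<bar> = F1 x} \<in> sets (lborel \<Otimes>\<^sub>M lborel)"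
          using F1p by measurable
        show "AE z' in lborel. AE s in lborel. indicator {0<..} (snd (z', s)) * \<bar>F (z', s)\<bar> = F1 (z', s)"
          using AEfin
        proof eventually_elim
          fix z' assume fin: "\<Phi> z' \<noteq> top"
          show "AE s in lborel. indicator {0<..} (snd (z', s)) * \<bar>F (z', s)\<bar> = F1 (z', s)"
          proof (cases "\<Phi> z' = 0")
            case True
            then have "AE s in lborel. indicator {0<..} s * ennreal (\<bar>F (z', s)\<bar> powr \<eta>) = 0"
              unfolding \<Phi>_def by (subst (asm) nn_integral_0_iff_AE) auto
            then show ?thesis
            proof eventually_elim
              fix s assume "indicator {0<..} s * ennreal (\<bar>F (z', s)\<bar> powr \<eta>) = 0"
              then have "0 < s \<Longrightarrow> F (z', s) = 0" by (auto simp: indicator_def)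
              moreover have "\<not> good z'" using True by (simp add: good_def)
              ultimately show "indicator {0<..} (snd (z', s)) * \<bar>F (z', s)\<bar> = F1 (z', s)"
                by (auto simp: F1_def indicator_def)
            qed
          next
            case False
            then have "good z'" using fin by (simp add: good_def zero_less_iff_neq_zero less_top)
            then show ?thesis by (intro AE_I2) (simp add: F1_def indicator_def)
          qed
        qed
      qed
      then show ?thesis by (metis lborel_prod)
    qed
    have Ggood: "(\<integral>\<^sup>+z. ennreal (indicator {0<..} (snd z) * \<bar>F z\<bar> * dist y z powr (-mm)) \<partial>lborel) = G1 (fst y) (snd y)" for y
      unfolding G1_def using R2 by (intro nn_integral_cong_AE) (auto elim!: eventually_mono)
    have Gle: "ennreal \<bar>G_op \<beta> F y\<bar> \<le> G1 (fst y) (snd y)" for y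
      using Gop_le[of \<beta> F y] Ggood[of y] by (simp add: mm_def)
    define K where "K = c powr p * CH"
    have K0: "0 < K" using c0 CH by (simp add: K_def)
    have inner: "(\<integral>\<^sup>+t. indicator {0<..} t * ennreal (\<bar>G_op \<beta> F (x', t)\<bar> powr q) \<partial>lborel) \<le> epow (I x') q" for x'
    proof -
      have "(\<integral>\<^sup>+t. indicator {0<..} t * ennreal (\<bar>G_op \<beta> F (x', t)\<bar> powr q) \<partial>lborel) \<le> (\<integral>\<^sup>+t. epow (G1 x' t) q \<partial>lborel)"
      proof (intro nn_integral_mono)
        fix t
        have "indicator {0<..} t * ennreal (\<bar>G_op \<beta> F (x', t)\<bar> powr q) \<le> ennreal (\<bar>G_op \<beta> F (x', t)\<bar> powr q)"
          by (simp add: indicator_def)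
        also have "\<dots> = epow (ennreal \<bar>G_op \<beta> F (x', t)\<bar>) q" by (simp add: epow_ennreal)
        also have "\<dots> \<le> epow (G1 x' t) q" using Gle[of "(x', t)"] q1 by (intro epow_mono) auto
        finally show "indicator {0<..} t * ennreal (\<bar>G_op \<beta> F (x', t)\<bar> powr q) \<le> epow (G1 x' t) q" .
      qed
      also have "\<dots> \<le> epow (I x') q" by (rule MB)
      finally show ?thesis .
    qed
    have mixG: "mixnorm p q (G_op \<beta> F) \<le> ennreal (c * CH powr (1/p)) * mixnorm \<tau> \<eta> F"
    proof -
      have "mixnorm p q (G_op \<beta> F) = epow (\<integral>\<^sup>+x'. epow (\<integral>\<^sup>+t. indicator {0<..} t * ennreal (\<bar>G_op \<beta> F (x', t)\<bar> powr q) \<partial>lborel) (p/q) \<partial>lborel) (1/p)"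
        by (simp add: mixnorm_def)
      also have "\<dots> \<le> epow (\<integral>\<^sup>+x'. epow (epow (I x') q) (p/q) \<partial>lborel) (1/p)"
        using p0 q1 inner by (intro epow_mono nn_integral_mono) auto
      also have "(\<lambda>x'. epow (epow (I x') q) (p/q)) = (\<lambda>x'. epow (I x') p)"
        using q1 by (simp add: epow_epow)
      also have "epow (\<integral>\<^sup>+x'. epow (I x') p \<partial>lborel) (1/p) \<le> epow (ennreal K * epow M0 (p/\<tau>)) (1/p)"
        using BI p0 by (intro epow_mono) (auto simp: K_def)
      also have "\<dots> = ennreal (K powr (1/p)) * epow M0 (1/\<tau>)"
        using K0 p0 by (simp add: epow_mult epow_epow epow_ennreal)
      also have "K powr (1/p) = c * CH powr (1/p)"
        using c0 CH p0 by (simp add: K_def powr_mult powr_powr)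
      finally show ?thesis by (simp add: mix)
    qed
    have Im[measurable]: "I \<in> borel_measurable lborel" unfolding I_def[abs_def] by measurable
    have AEI: "AE x' in lborel. I x' \<noteq> \<infinity>"
    proof -
      have "(\<integral>\<^sup>+x'. epow (I x') p \<partial>lborel) \<noteq> \<infinity>"
      proof -
        have "ennreal K * epow M0 (p/\<tau>) < top"
          using M0fin by (simp add: ennreal_mult_less_top epow_fin)
        then show ?thesis using BI by (auto simp: K_def top_unique)
      qed
      then have "AE x' in lborel. epow (I x') p \<noteq> \<infinity>"
        by (intro nn_integral_PInf_AE) auto
      then show ?thesis by (auto simp: epow_eq_top_iff)
    qed
    define G2 where "G2 x' t = (\<integral>\<^sup>+z. ennreal (F1 z * sqrt ((norm (x' - fst z))\<^sup>2 + (t - snd z)\<^sup>2) powr (-mm)) \<partial>(lborel \<Otimes>\<^sub>M lborel))" for x' t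
    have G12: "G1 x' t = G2 x' t" for x' t
      unfolding G1_def G2_def by (simp add: lborel_prod dist_prod_eq)
    have G2m: "(\<lambda>(x', t). G2 x' t) \<in> borel_measurable (lborel \<Otimes>\<^sub>M lborel)"
      unfolding G2_def using F1p by measurable
    have G1m[measurable]: "(\<lambda>(x', t). G1 x' t) \<in> borel_measurable (lborel \<Otimes>\<^sub>M lborel)"
      using G2m by (simp add: G12)
    have AEG: "AE y in lborel. G1 (fst y) (snd y) \<noteq> \<infinity>"
    proof -
      have "AE y in lborel \<Otimes>\<^sub>M lborel. G1 (fst y) (snd y) \<noteq> \<infinity>"
      proof (rule lborel_pair.AE_pair_measure)
        show "{x \<in> space (lborel \<Otimes>\<^sub>M lborel). G1 (fst x) (snd x) \<noteq> \<infinity>} \<in> sets (lborel \<Otimes>\<^sub>M lborel)"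
        proof -
          have "(\<lambda>x. G1 (fst x) (snd x)) \<in> borel_measurable (lborel \<Otimes>\<^sub>M lborel)"
            using G1m by (simp add: case_prod_beta')
          then show ?thesis by measurable
        qed
        show "AE x' in lborel. AE t in lborel. G1 (fst (x', t)) (snd (x', t)) \<noteq> \<infinity>"
          using AEI
        proof eventually_elim
          fix x' assume "I x' \<noteq> \<infinity>"
          then have "(\<integral>\<^sup>+t. epow (G1 x' t) q \<partial>lborel) \<noteq> \<infinity>"
            using MB[of x'] by (auto simp: epow_eq_top_iff top_unique)
          then have "AE t in lborel. epow (G1 x' t) q \<noteq> \<infinity>"
            by (intro nn_integral_PInf_AE) (use G1m in measurable)
          then show "AE t in lborel. G1 (fst (x', t)) (snd (x', t)) \<noteq> \<infinity>"
            by (auto simp: epow_eq_top_iff)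
        qed
      qed
      then show ?thesis by (metis lborel_prod)
    qed
    have AEint: "AE y in lborel. y \<in> upper_half TYPE('m) \<longrightarrow>
                set_integrable lborel (upper_half TYPE('m))
                  (\<lambda>z. F z / dist y z powr (real (CARD('m) + 1) - \<beta>))"
      using AEG
    proof eventually_elim
      fix y :: "(real^'m) \<times> real"
      assume fin: "G1 (fst y) (snd y) \<noteq> \<infinity>"
      let ?f = "\<lambda>z. indicator (upper_half TYPE('m)) z *\<^sub>R (F z / dist y z powr (real (CARD('m) + 1) - \<beta>))"
      have feq: "?f = (\<lambda>z. indicator {0<..} (snd z) * (F z / sqrt ((norm (fst y - fst z))\<^sup>2 + (snd y - snd z)\<^sup>2) powr mm))"
        by (simp add: fun_eq_iff upper_half_ind dist_prod_eq mm_def)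
      have "(\<lambda>z. indicator {0<..} (snd z) * (F z / sqrt ((norm (fst y - fst z))\<^sup>2 + (snd y - snd z)\<^sup>2) powr mm)) \<in> borel_measurable (lborel \<Otimes>\<^sub>M lborel)"
        by measurable
      then have fm: "?f \<in> borel_measurable lborel" unfolding feq by (simp add: lborel_prod)
      have "(\<integral>\<^sup>+z. ennreal (norm (?f z)) \<partial>lborel) = G1 (fst y) (snd y)"
        unfolding norm_integrand Ggood[symmetric] by (simp add: mm_def)
      then have "(\<integral>\<^sup>+z. ennreal (norm (?f z)) \<partial>lborel) < \<infinity>" using fin by (simp add: less_top)
      then have "integrable lborel ?f" by (intro integrableI_bounded fm)
      then show "y \<in> upper_half TYPE('m) \<longrightarrow> set_integrable lborel (upper_half TYPE('m)) (\<lambda>z. F z / dist y z powr (real (CARD('m) + 1) - \<beta>))"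
        by (simp add: set_integrable_def)
    qed
    show "(AE y in lborel. y \<in> upper_half TYPE('m) \<longrightarrow>
                set_integrable lborel (upper_half TYPE('m))
                  (\<lambda>z. F z / dist y z powr (real (CARD('m) + 1) - \<beta>)))
           \<and> mixnorm p q (G_op \<beta> F) \<le> ennreal (c * CH powr (1/p)) * mixnorm \<tau> \<eta> F"
      using AEint mixG by blast
  qed
qed


end
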